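(* Let $v_1,\dots,v_m\in\mathbb{C}^d$ with $m$ even, $\sum_{i=1}^m v_iv_i^*=\mathbb{I}$, $\|v_i\|^2=\alpha$ for all $i$, and $\alpha\le\frac{1}{221d}$. Run Algorithm 1 (described in the context) and fix an iteration $0\le j<m/2$. Suppose that for every $0\le j'\le j$ we have $u_{j'}-\lambda_{\max}(A_{j'})\ge 1/3$ and $\kappa(u_{j'}\mathbb{I}-A_{j'})\le 3/2$. Write $A=A_j$, $\mathcal{B}=\mathcal{B}_j$, $u=u_j$, $\widehat u=u_{j+1}$. Then \[ \sum_{v\in\mathcal{B}}\Big(\Phi^u(A)-\Phi^{\widehat u}(A+vv^* )\Big)\ge(m-j)\cdot\mathrm{tr}\Big[\log\big((u\mathbb{I}-A)^{-1}(\widehat u\mathbb{I}-A)\big)\Big]+\frac1\alpha\cdot\frac{m-j}{m}\cdot\mathrm{tr}\Big[\log\big(\mathbb{I}-\alpha(\widehat u\mathbb{I}-A)^{-1}\big)\Big]. \]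
   Context: For a Hermitian matrix $A$ and $u\in\mathbb{R}$ with $u\mathbb{I}-A$ positive definite, $\Phi^u(A)=\mathrm{tr}\log\big((u\mathbb{I}-A)^{-1}\big)=-\log\det(u\mathbb{I}-A)$, with $\log$ the matrix logarithm. Algorithm 1: set $A_0=\mathbf{0}_{d\times d}$, $\mathcal{A}_0=\emptyset$, $\mathcal{B}_0=\{v_1,\dots,v_m\}$, $u_0=1/2$, $\delta_u=\alpha/d$. For $j=0,\dots,m/2-1$: set $u_{j+1}=u_j+\delta_u$; choose $v_j\in\mathcal{B}_j$ maximising $\det(u_{j+1}\mathbb{I}-A_j-vv^* )$ over $v\in\mathcal{B}_j$ (ties arbitrary); set $A_{j+1}=A_j+v_jv_j^*$, $\mathcal{A}_{j+1}=\mathcal{A}_j\cup\{v_j\}$, $\mathcal{B}_{j+1}=\mathcal{B}_j\setminus\{v_j\}$. $\kappa(B)=\lambda_{\max}(B)/\lambda_{\min}(B)$ for Hermitian positive definite $B$. *)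

theory Defs
  imports "Jordan_Normal_Form.Jordan_Normal_Form" "Jordan_Normal_Form.Gauss_Jordan_Elimination"
    "HOL-Computational_Algebra.Polynomial"
begin

definition outer :: "complex vec \<Rightarrow> complex mat" where
  "outer v = mat (dim_vec v) (dim_vec v) (\<lambda>(i,k). v $ i * cnj (v $ k))"

fun msum :: "nat \<Rightarrow> (nat \<Rightarrow> complex mat) \<Rightarrow> nat \<Rightarrow> complex mat" where
  "msum d f 0 = 0\<^sub>m d d"
| "msum d f (Suc n) = msum d f n + f n"

definition sqnorm :: "complex vec \<Rightarrow> real" where
  "sqnorm v = (\<Sum>i<dim_vec v. (cmod (v $ i))^2)"

text \<open>Matrix inverse (junk value for singular matrices).\<close>
definition minv :: "complex mat \<Rightarrow> complex mat" where
  "minv M = (case mat_inverse M of Some N \<Rightarrow> N | None \<Rightarrow> 0\<^sub>m (dim_row M) (dim_row M))"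

definition eigs :: "complex mat \<Rightarrow> complex multiset" where
  "eigs M = proots (char_poly M)"

definition lmax :: "complex mat \<Rightarrow> real" where
  "lmax M = Max (Re ` set_mset (eigs M))"

definition lmin :: "complex mat \<Rightarrow> real" where
  "lmin M = Min (Re ` set_mset (eigs M))"

definition kappa :: "complex mat \<Rightarrow> real" where
  "kappa M = lmax M / lmin M"

text \<open>tr log M for a matrix with positive real spectrum (e.g. Hermitian positive definite,
  or a product of commuting such matrices): trace of the matrix logarithm = sum of
  logarithms of the eigenvalues with multiplicity.\<close>
definition trlog :: "complex mat \<Rightarrow> real" where
  "trlog M = (\<Sum>z\<in>#eigs M. ln (Re z))"

definition Phi :: "nat \<Rightarrow> real \<Rightarrow> complex mat \<Rightarrow> real" where
  "Phi d u A = trlog (minv (of_real u \<cdot>\<^sub>m 1\<^sub>m d - A))"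

text \<open>Algorithm 1, run with a choice sequence \<sigma> of indices (index \<sigma> j is the vector
  chosen at iteration j).  u_j = 1/2 + j \<alpha>/d.\<close>
definition ualg :: "real \<Rightarrow> nat \<Rightarrow> nat \<Rightarrow> real" where
  "ualg \<alpha> d j = 1/2 + real j * (\<alpha> / real d)"

fun Aalg :: "nat \<Rightarrow> (nat \<Rightarrow> complex vec) \<Rightarrow> (nat \<Rightarrow> nat) \<Rightarrow> nat \<Rightarrow> complex mat" where
  "Aalg d v \<sigma> 0 = 0\<^sub>m d d"
| "Aalg d v \<sigma> (Suc j) = Aalg d v \<sigma> j + outer (v (\<sigma> j))"

definition Balg :: "nat \<Rightarrow> (nat \<Rightarrow> nat) \<Rightarrow> nat \<Rightarrow> nat set" where
  "Balg m \<sigma> j = {0..<m} - \<sigma> ` {..<j}"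

text \<open>\<sigma> is a valid run of Algorithm 1 (ties broken arbitrarily).\<close>
definition alg_run :: "nat \<Rightarrow> nat \<Rightarrow> real \<Rightarrow> (nat \<Rightarrow> complex vec) \<Rightarrow> (nat \<Rightarrow> nat) \<Rightarrow> bool" where
  "alg_run d m \<alpha> v \<sigma> \<longleftrightarrow>
     (\<forall>j < m div 2. \<sigma> j \<in> Balg m \<sigma> j \<and>
        (\<forall>k \<in> Balg m \<sigma> j.
           Re (det (of_real (ualg \<alpha> d (Suc j)) \<cdot>\<^sub>m 1\<^sub>m d - Aalg d v \<sigma> j - outer (v k)))
           \<le> Re (det (of_real (ualg \<alpha> d (Suc j)) \<cdot>\<^sub>m 1\<^sub>m d - Aalg d v \<sigma> j - outer (v (\<sigma> j))))))"

end

theory Submission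
  imports Defs "Jordan_Normal_Form.Schur_Decomposition"
begin

definition adj :: "complex mat \<Rightarrow> complex mat" where
  "adj M = mat (dim_col M) (dim_row M) (\<lambda>(i,j). cnj (M $$ (j,i)))"
definition dmat :: "nat \<Rightarrow> (nat \<Rightarrow> complex) \<Rightarrow> complex mat" where
  "dmat n f = mat n n (\<lambda>(i,j). if i = j then f i else 0)"
definition unitary :: "nat \<Rightarrow> complex mat \<Rightarrow> bool" where
  "unitary n U \<longleftrightarrow> U \<in> carrier_mat n n \<and> adj U * U = 1\<^sub>m n \<and> U * adj U = 1\<^sub>m n"

lemma adj_carrier[simp]: "U \<in> carrier_mat n m \<Longrightarrow> adj U \<in> carrier_mat m n"
  unfolding adj_def by auto
lemma adj_dims[simp]: "dim_row (adj U) = dim_col U" "dim_col (adj U) = dim_row U"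
  unfolding adj_def by auto
lemma adj_index[simp]: "i < dim_col U \<Longrightarrow> j < dim_row U \<Longrightarrow> adj U $$ (i,j) = cnj (U $$ (j,i))"
  unfolding adj_def by auto
lemma dmat_carrier[simp]: "dmat n f \<in> carrier_mat n n"
  unfolding dmat_def by auto
lemma dmat_dims[simp]: "dim_row (dmat n f) = n" "dim_col (dmat n f) = n"
  unfolding dmat_def by auto
lemma dmat_index[simp]: "i < n \<Longrightarrow> j < n \<Longrightarrow> dmat n f $$ (i,j) = (if i = j then f i else 0)"
  unfolding dmat_def by auto

lemma proots_linprod: "proots (\<Prod>a\<leftarrow>xs. [:- a, 1:]) = mset (xs :: complex list)"
proof (induction xs)
  case Nil thus ?case by simp
next
  case (Cons a xs)
  have nz: "(\<Prod>a\<leftarrow>xs. [:- a, 1:]) \<noteq> (0::complex poly)"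
    by (auto simp: prod_list_zero_iff)
  have e: "(\<Prod>a\<leftarrow>a#xs. [:- a, 1:]) = [:- a, 1:] * (\<Prod>a\<leftarrow>xs. [:- a, 1:])" by simp
  have "proots (\<Prod>a\<leftarrow>a#xs. [:- a, 1:]) = proots [:- a, 1:] + proots (\<Prod>a\<leftarrow>xs. [:- a, 1:])"
    unfolding e by (rule proots_mult) (use nz in auto)
  also have "proots [:- a, 1:] = {#a#}" using proots_linear_factor[of "-a"] by simp
  finally show ?case using Cons by simp
qed

lemma unitary_sim: assumes "unitary n U"
  shows "similar_mat (U * dmat n f * adj U) (dmat n f)"
proof -
  have U: "U \<in> carrier_mat n n" "adj U * U = 1\<^sub>m n" "U * adj U = 1\<^sub>m n" using assms unfolding unitary_def by auto
  have "similar_mat_wit (U * dmat n f * adj U) (dmat n f) U (adj U)"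
    unfolding similar_mat_wit_def Let_def using U by auto
  thus ?thesis unfolding similar_mat_def by blast
qed

lemma prod_list_upt0: "prod_list (map f [0..<n]) = (\<Prod>i<n. f i)"
  by (induction n) auto
lemma sum_list_upt0: "sum_list (map f [0..<n]) = (\<Sum>i<n. f i)"
  by (induction n) auto

lemma diag_dmat: "diag_mat (dmat n f) = map f [0..<n]"
  unfolding diag_mat_def by (intro map_cong) auto

lemma ut_dmat: "upper_triangular (dmat n f)"
  unfolding upper_triangular_def by auto

lemma eigs_diag: assumes "unitary n U"
  shows "eigs (U * dmat n f * adj U) = mset (map f [0..<n])"
proof -
  have "char_poly (U * dmat n f * adj U) = char_poly (dmat n f)"
    by (rule char_poly_similar[OF unitary_sim[OF assms]])
  also have "\<dots> = (\<Prod>a\<leftarrow>map f [0..<n]. [:- a, 1:])"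
    using char_poly_upper_triangular[OF dmat_carrier ut_dmat] diag_dmat by metis
  finally show ?thesis unfolding eigs_def by (metis proots_linprod)
qed

lemma det_diag: assumes "unitary n U"
  shows "det (U * dmat n f * adj U) = (\<Prod>i<n. f i)"
proof -
  have "det (U * dmat n f * adj U) = det (dmat n f)" by (rule det_similar[OF unitary_sim[OF assms]])
  also have "\<dots> = prod_list (map f [0..<n])"
    using det_upper_triangular[OF ut_dmat dmat_carrier] diag_dmat by metis
  also have "\<dots> = (\<Prod>i<n. f i)"
    by (rule prod_list_upt0)
  finally show ?thesis .
qed

lemma trlog_diag: assumes "unitary n U"
  shows "trlog (U * dmat n f * adj U) = (\<Sum>i<n. ln (Re (f i)))"
proof -
  have "trlog (U * dmat n f * adj U) = sum_list (map (\<lambda>z. ln (Re z)) (map f [0..<n]))"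
    unfolding trlog_def eigs_diag[OF assms] by (metis mset_map sum_mset_sum_list)
  also have "\<dots> = (\<Sum>i<n. ln (Re (f i)))"
    by (simp add: sum_list_upt0) 
  finally show ?thesis .
qed

lemma minv_eq: assumes A: "A \<in> carrier_mat n n" and B: "B \<in> carrier_mat n n" and AB: "A * B = 1\<^sub>m n"
  shows "minv A = B"
proof -
  have BA: "B * A = 1\<^sub>m n" by (rule mat_mult_left_right_inverse[OF A B AB])
  show ?thesis
  proof (cases "mat_inverse A")
    case None
    from mat_inverse(1)[OF A None, of undefined] have "A \<notin> Units (ring_mat TYPE(complex) n undefined)" .
    moreover have "A \<in> Units (ring_mat TYPE(complex) n undefined)"
      unfolding Units_def ring_mat_def using A B AB BA by auto
    ultimately show ?thesis by blast
  next
    case (Some C)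
    from mat_inverse(2)[OF A Some] have C: "A * C = 1\<^sub>m n" "C * A = 1\<^sub>m n" "C \<in> carrier_mat n n" by auto
    have e: "(C * A) * B = C * (A * B)" by (rule assoc_mult_mat[OF C(3) A B])
    have "C = B" using e C(2,3) AB B by (metis left_mult_one_mat right_mult_one_mat)
    thus ?thesis unfolding minv_def Some by simp
  qed
qed

lemma udu_index: assumes U: "U \<in> carrier_mat n n" and a: "a < n" and b: "b < n"
  shows "(U * dmat n f * adj U) $$ (a,b) = (\<Sum>i<n. U$$(a,i) * f i * cnj (U$$(b,i)))"
proof -
  have 1: "(U * dmat n f) $$ (a,i) = U$$(a,i) * f i" if "i < n" for i
  proof -
    have "(U * dmat n f) $$ (a,i) = (\<Sum>k = 0..<n. U$$(a,k) * (if k = i then f k else 0))"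
      using U a that by (auto simp: scalar_prod_def intro!: sum.cong)
    also have "\<dots> = (\<Sum>k = 0..<n. if k = i then U$$(a,k) * f k else 0)"
      by (rule sum.cong) auto
    also have "\<dots> = U$$(a,i) * f i" using that by (simp add: sum.delta')
    finally show ?thesis .
  qed
  have "(U * dmat n f * adj U) $$ (a,b) = (\<Sum>i = 0..<n. (U * dmat n f) $$ (a,i) * cnj (U$$(b,i)))"
    using U a b by (auto simp: scalar_prod_def intro!: sum.cong)
  also have "\<dots> = (\<Sum>i<n. U$$(a,i) * f i * cnj (U$$(b,i)))"
    using 1 by (auto simp: atLeast0LessThan intro!: sum.cong)
  finally show ?thesis .
qed

lemma unitary_rows: assumes "unitary n U" "a < n" "b < n"
  shows "(\<Sum>i<n. U$$(a,i) * cnj (U$$(b,i))) = (if a = b then 1 else 0)"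
proof -
  have U: "U \<in> carrier_mat n n" "U * adj U = 1\<^sub>m n" using assms unfolding unitary_def by auto
  have e1: "(U * adj U) $$ (a,b) = (\<Sum>i = 0..<n. U$$(a,i) * cnj (U$$(b,i)))"
    using U(1) assms by (auto simp: scalar_prod_def intro!: sum.cong)
  have e2: "(U * adj U) $$ (a,b) = (if a = b then 1 else 0)" using U assms by simp
  show ?thesis using e1 e2 by (metis atLeast0LessThan)
qed

lemma unitary_cols: assumes "unitary n U" "a < n" "b < n"
  shows "(\<Sum>i<n. cnj (U$$(i,a)) * U$$(i,b)) = (if a = b then 1 else 0)"
proof -
  have U: "U \<in> carrier_mat n n" "adj U * U = 1\<^sub>m n" using assms unfolding unitary_def by auto
  have e1: "(adj U * U) $$ (a,b) = (\<Sum>i = 0..<n. cnj (U$$(i,a)) * U$$(i,b))"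
    using U(1) assms by (auto simp: scalar_prod_def intro!: sum.cong)
  have e2: "(adj U * U) $$ (a,b) = (if a = b then 1 else 0)" using U assms by simp
  show ?thesis using e1 e2 by (metis atLeast0LessThan)
qed

lemma udu_lin: assumes "unitary n U"
  shows "c \<cdot>\<^sub>m 1\<^sub>m n + e \<cdot>\<^sub>m (U * dmat n f * adj U) = U * dmat n (\<lambda>i. c + e * f i) * adj U"
proof -
  have U: "U \<in> carrier_mat n n" using assms unfolding unitary_def by auto
  show ?thesis
  proof (rule eq_matI)
    fix a b assume a: "a < dim_row (U * dmat n (\<lambda>i. c + e * f i) * adj U)" and b: "b < dim_col (U * dmat n (\<lambda>i. c + e * f i) * adj U)"
    hence a: "a < n" and b: "b < n" using U by auto
    have "(U * dmat n (\<lambda>i. c + e * f i) * adj U) $$ (a,b) = (\<Sum>i<n. U$$(a,i) * (c + e * f i) * cnj (U$$(b,i)))"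
      by (rule udu_index[OF U a b])
    also have "\<dots> = c * (\<Sum>i<n. U$$(a,i) * cnj (U$$(b,i))) + e * (\<Sum>i<n. U$$(a,i) * f i * cnj (U$$(b,i)))"
      by (simp add: algebra_simps sum.distrib sum_distrib_left)
    also have "\<dots> = (c \<cdot>\<^sub>m 1\<^sub>m n + e \<cdot>\<^sub>m (U * dmat n f * adj U)) $$ (a,b)"
      using a b U unitary_rows[OF assms a b] udu_index[OF U a b] by simp
    finally show "(c \<cdot>\<^sub>m 1\<^sub>m n + e \<cdot>\<^sub>m (U * dmat n f * adj U)) $$ (a,b) = (U * dmat n (\<lambda>i. c + e * f i) * adj U) $$ (a,b)" by simp
  qed (use U in auto)
qed

lemma udu_minus: assumes "unitary n U"
  shows "c \<cdot>\<^sub>m 1\<^sub>m n - (U * dmat n f * adj U) = U * dmat n (\<lambda>i. c - f i) * adj U"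
proof -
  have U: "U \<in> carrier_mat n n" using assms unfolding unitary_def by auto
  have "c \<cdot>\<^sub>m 1\<^sub>m n - (U * dmat n f * adj U) = c \<cdot>\<^sub>m 1\<^sub>m n + (-1) \<cdot>\<^sub>m (U * dmat n f * adj U)"
    by (rule eq_matI) (use U in auto)
  also have "\<dots> = U * dmat n (\<lambda>i. c - f i) * adj U" using udu_lin[OF assms, of c "-1" f] by simp
  finally show ?thesis .
qed

lemma dmat_mult: "dmat n f * dmat n g = dmat n (\<lambda>i. f i * g i)"
proof (rule eq_matI)
  fix a b assume "a < dim_row (dmat n (\<lambda>i. f i * g i))" "b < dim_col (dmat n (\<lambda>i. f i * g i))"
  hence a: "a < n" and b: "b < n" by auto
  have "(dmat n f * dmat n g) $$ (a,b) = (\<Sum>k = 0..<n. (if a = k then f a else 0) * (if k = b then g k else 0))"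
    using a b by (auto simp: scalar_prod_def intro!: sum.cong)
  also have "\<dots> = (\<Sum>k = 0..<n. if k = a then (if a = b then f a * g a else 0) else 0)"
    by (rule sum.cong) auto
  also have "\<dots> = (if a = b then f a * g a else 0)" using a by (simp add: sum.delta')
  finally show "(dmat n f * dmat n g) $$ (a,b) = dmat n (\<lambda>i. f i * g i) $$ (a,b)" using a b by simp
qed auto

lemma udu_mult: assumes "unitary n U"
  shows "(U * dmat n f * adj U) * (U * dmat n g * adj U) = U * dmat n (\<lambda>i. f i * g i) * adj U"
proof -
  have U: "U \<in> carrier_mat n n" "adj U * U = 1\<^sub>m n" "adj U \<in> carrier_mat n n" using assms unfolding unitary_def by auto
  have D1: "dmat n f \<in> carrier_mat n n" and D2: "dmat n g \<in> carrier_mat n n" by auto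
  have a1: "(U * dmat n f * adj U) * (U * dmat n g * adj U) = (U * dmat n f) * (adj U * (U * dmat n g * adj U))"
    by (rule assoc_mult_mat) (use U D1 D2 in auto)
  have a2: "adj U * (U * dmat n g * adj U) = (adj U * (U * dmat n g)) * adj U"
    by (rule assoc_mult_mat[symmetric]) (use U D1 D2 in auto)
  have a3: "adj U * (U * dmat n g) = dmat n g"
    using assoc_mult_mat[OF U(3) U(1) D2] U(2) D2 by (metis left_mult_one_mat)
  have a4: "(U * dmat n f) * (dmat n g * adj U) = U * (dmat n f * dmat n g) * adj U"
  proof -
    have "(U * dmat n f) * (dmat n g * adj U) = U * (dmat n f * (dmat n g * adj U))"
      by (rule assoc_mult_mat) (use U D1 D2 in auto)
    also have "dmat n f * (dmat n g * adj U) = (dmat n f * dmat n g) * adj U"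
      by (rule assoc_mult_mat[symmetric]) (use U D1 D2 in auto)
    also have "U * ((dmat n f * dmat n g) * adj U) = U * (dmat n f * dmat n g) * adj U"
      by (rule assoc_mult_mat[symmetric]) (use U D1 D2 in auto)
    finally show ?thesis .
  qed
  show ?thesis using a1 a2 a3 a4 by (simp add: dmat_mult)
qed

lemma udu_one: assumes "unitary n U" shows "U * dmat n (\<lambda>i. 1) * adj U = 1\<^sub>m n"
proof -
  have U: "U \<in> carrier_mat n n" "U * adj U = 1\<^sub>m n" using assms unfolding unitary_def by auto
  have "dmat n (\<lambda>i. 1) = 1\<^sub>m n" by (rule eq_matI) auto
  thus ?thesis using U by simp
qed

lemma minv_udu: assumes "unitary n U" "\<And>i. i < n \<Longrightarrow> f i \<noteq> 0"
  shows "minv (U * dmat n f * adj U) = U * dmat n (\<lambda>i. 1 / f i) * adj U"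
proof (rule minv_eq)
  have U: "U \<in> carrier_mat n n" using assms unfolding unitary_def by auto
  show "U * dmat n f * adj U \<in> carrier_mat n n" "U * dmat n (\<lambda>i. 1 / f i) * adj U \<in> carrier_mat n n" using U by auto
  have "dmat n (\<lambda>i. f i * (1 / f i)) = dmat n (\<lambda>i. 1)" by (rule eq_matI) (use assms(2) in auto)
  then show "U * dmat n f * adj U * (U * dmat n (\<lambda>i. 1 / f i) * adj U) = 1\<^sub>m n"
    using udu_mult[OF assms(1)] udu_one[OF assms(1)] by metis
qed

definition ip :: "complex vec \<Rightarrow> complex vec \<Rightarrow> complex" where
  "ip x y = (\<Sum>i<dim_vec x. cnj (x$i) * y$i)"
definition herm :: "nat \<Rightarrow> complex mat \<Rightarrow> bool" where
  "herm n M \<longleftrightarrow> M \<in> carrier_mat n n \<and> (\<forall>a<n. \<forall>b<n. M$$(a,b) = cnj (M$$(b,a)))"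
definition mtr :: "complex mat \<Rightarrow> complex" where
  "mtr M = (\<Sum>i<dim_row M. M$$(i,i))"

lemma herm_carrier: "herm n M \<Longrightarrow> M \<in> carrier_mat n n"
  unfolding herm_def by blast
lemma herm_cnj: assumes "herm n M" "a < n" "b < n" shows "cnj (M$$(b,a)) = M$$(a,b)"
proof -
  have "M$$(a,b) = cnj (M$$(b,a))" using assms unfolding herm_def by blast
  thus ?thesis by (metis complex_cnj_cnj)
qed

lemma mv_index: assumes "M \<in> carrier_mat n n" "y \<in> carrier_vec n" "a < n"
  shows "(M *\<^sub>v y) $ a = (\<Sum>b<n. M$$(a,b) * y$b)"
  using assms by (auto simp: scalar_prod_def atLeast0LessThan intro!: sum.cong)

lemma ip_cnj: "dim_vec x = dim_vec y \<Longrightarrow> ip x y = cnj (ip y x)"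
  unfolding ip_def by (simp add: mult.commute)

lemma ip_smult_right: "dim_vec x = dim_vec y \<Longrightarrow> ip x (e \<cdot>\<^sub>v y) = e * ip x y"
  unfolding ip_def by (simp add: sum_distrib_left algebra_simps)

lemma ip_smult_left: "ip (e \<cdot>\<^sub>v x) y = cnj e * ip x y"
  unfolding ip_def by (simp add: sum_distrib_left algebra_simps)

lemma ip_self: "ip x x = of_real (\<Sum>i<dim_vec x. (cmod (x$i))^2)"
  unfolding ip_def of_real_sum
  by (intro sum.cong refl) (metis complex_norm_square of_real_power mult.commute)

lemma ip_self_pos: assumes "x \<in> carrier_vec n" "x \<noteq> 0\<^sub>v n"
  shows "(\<Sum>i<dim_vec x. (cmod (x$i))^2) > 0"
proof -
  have "\<exists>i<n. x $ i \<noteq> 0"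
  proof (rule ccontr)
    assume "\<not> ?thesis"
    hence "x = 0\<^sub>v n" using assms(1) by (intro eq_vecI) auto
    thus False using assms(2) by simp
  qed
  then obtain i where i: "i < n" "x $ i \<noteq> 0" by blast
  have "(\<Sum>i<dim_vec x. (cmod (x$i))^2) \<ge> (cmod (x$i))^2"
    by (rule member_le_sum) (use i assms in auto)
  moreover have "(cmod (x$i))^2 > 0" using i by simp
  ultimately show ?thesis by linarith
qed

lemma ip_self_nz: assumes "x \<in> carrier_vec n" "x \<noteq> 0\<^sub>v n" shows "ip x x \<noteq> 0"
proof -
  define r where "r = (\<Sum>i<dim_vec x. (cmod (x$i))^2)"
  have "r > 0" unfolding r_def by (rule ip_self_pos[OF assms])
  moreover have "ip x x = of_real r" unfolding r_def by (rule ip_self)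
  ultimately show ?thesis by (metis of_real_eq_0_iff less_irrefl)
qed

lemma herm_ip: assumes M: "herm n M" and x: "x \<in> carrier_vec n" and y: "y \<in> carrier_vec n"
  shows "ip x (M *\<^sub>v y) = ip (M *\<^sub>v x) y"
proof -
  have Mc: "M \<in> carrier_mat n n" and Mh: "\<And>a b. a<n \<Longrightarrow> b<n \<Longrightarrow> cnj (M$$(b,a)) = M$$(a,b)"
    using herm_carrier[OF M] herm_cnj[OF M] by auto
  have dx: "dim_vec x = n" and dMx: "dim_vec (M *\<^sub>v x) = n" using x Mc by auto
  have "ip x (M *\<^sub>v y) = (\<Sum>a<n. cnj (x$a) * (\<Sum>b<n. M$$(a,b) * y$b))"
    unfolding ip_def dx by (rule sum.cong[OF refl]) (simp add: mv_index[OF Mc y])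
  also have "\<dots> = (\<Sum>a<n. \<Sum>b<n. cnj (x$a) * M$$(a,b) * y$b)"
    by (simp add: sum_distrib_left mult.assoc)
  also have "\<dots> = (\<Sum>b<n. \<Sum>a<n. cnj (x$a) * M$$(a,b) * y$b)"
    by (rule sum.swap)
  also have "\<dots> = (\<Sum>b<n. \<Sum>a<n. cnj (M$$(b,a) * x$a) * y$b)"
  proof (rule sum.cong[OF refl], rule sum.cong[OF refl])
    fix b a assume "b \<in> {..<n}" "a \<in> {..<n}"
    hence "cnj (M$$(b,a)) = M$$(a,b)" using Mh by auto
    thus "cnj (x$a) * M$$(a,b) * y$b = cnj (M$$(b,a) * x$a) * y$b" by simp
  qed
  also have "\<dots> = (\<Sum>b<n. cnj (\<Sum>a<n. M$$(b,a) * x$a) * y$b)"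
    by (simp add: sum_distrib_right cnj_sum)
  also have "\<dots> = ip (M *\<^sub>v x) y"
    unfolding ip_def dMx by (rule sum.cong[OF refl]) (simp add: mv_index[OF Mc x])
  finally show ?thesis .
qed

lemma eig_real: assumes M: "herm n M" and x: "x \<in> carrier_vec n" "x \<noteq> 0\<^sub>v n"
  and e: "M *\<^sub>v x = e \<cdot>\<^sub>v x"
  shows "e = of_real (Re e)"
proof -
  have Mc: "M \<in> carrier_mat n n" using herm_carrier[OF M] .
  have "e * ip x x = cnj e * ip x x"
    using herm_ip[OF M x(1) x(1)] unfolding e using x by (simp add: ip_smult_right ip_smult_left)
  moreover have "ip x x \<noteq> 0" by (rule ip_self_nz[OF x])
  ultimately have "e = cnj e" by simp
  thus ?thesis by (metis Reals_cnj_iff complex_is_Real_iff of_real_Re)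
qed

lemma mtr_comm: assumes "A \<in> carrier_mat n m" "B \<in> carrier_mat m n"
  shows "mtr (A * B) = mtr (B * A)"
proof -
  have "mtr (A * B) = (\<Sum>i<n. \<Sum>j<m. A$$(i,j) * B$$(j,i))"
    unfolding mtr_def using assms by (auto simp: scalar_prod_def atLeast0LessThan intro!: sum.cong)
  also have "\<dots> = (\<Sum>j<m. \<Sum>i<n. B$$(j,i) * A$$(i,j))"
    by (subst sum.swap) (simp add: mult.commute)
  also have "\<dots> = mtr (B * A)"
    unfolding mtr_def using assms by (auto simp: scalar_prod_def atLeast0LessThan intro!: sum.cong)
  finally show ?thesis .
qed

lemma mtr_sim: assumes "similar_mat_wit B T P Q" "B \<in> carrier_mat n n"
  shows "mtr B = mtr T"
proof -
  have c: "T \<in> carrier_mat n n" "P \<in> carrier_mat n n" "Q \<in> carrier_mat n n" "Q * P = 1\<^sub>m n" "B = P * T * Q"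
    using assms unfolding similar_mat_wit_def Let_def by auto
  have "mtr B = mtr (P * (T * Q))" using c by simp
  also have "\<dots> = mtr ((T * Q) * P)" by (rule mtr_comm) (use c in auto)
  also have "(T * Q) * P = T * (Q * P)" using c by simp
  also have "\<dots> = T" using c by simp
  finally show ?thesis .
qed

lemma mtr_ut: assumes "T \<in> carrier_mat n n" shows "mtr T = sum_list (diag_mat T)"
  unfolding mtr_def diag_mat_def using assms by (simp add: sum_list_upt0)

lemma exists_other_eig:
  assumes B: "B \<in> carrier_mat n n" and tr: "mtr B \<noteq> of_nat n * c"
  shows "\<exists>e. eigenvalue B e \<and> e \<noteq> c"
proof (rule ccontr)
  assume na: "\<not> ?thesis"
  obtain as where as: "char_poly B = (\<Prod>a\<leftarrow>as. [:- a, 1:])" "length as = n"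
    using char_poly_factorized[OF B] by blast
  have allc: "\<forall>a\<in>set as. a = c"
  proof
    fix a assume a: "a \<in> set as"
    have "poly (char_poly B) a = 0" unfolding as(1) poly_prod_list
      using a by (auto simp: prod_list_zero_iff)
    hence "eigenvalue B a" using eigenvalue_root_char_poly[OF B] by simp
    thus "a = c" using na by blast
  qed
  obtain T P Q where S: "schur_decomposition B as = (T,P,Q)" by (cases "schur_decomposition B as") auto
  from schur_decomposition[OF B as(1) S] have sw: "similar_mat_wit B T P Q" and dT: "diag_mat T = as" by auto
  have Tc: "T \<in> carrier_mat n n" using sw B unfolding similar_mat_wit_def Let_def by auto
  have "mtr B = sum_list as" using mtr_sim[OF sw B] mtr_ut[OF Tc] dT by simp
  also have "\<dots> = of_nat n * c" using allc as(2)
    by (metis sum_list_triv map_idI mult.commute of_nat_id) 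
  finally show False using tr by simp
qed

lemma onb_step:
  assumes A: "herm n A" and k: "k < n"
  and us: "\<forall>i<k. us i \<in> carrier_vec n \<and> A *\<^sub>v us i = of_real (lam i) \<cdot>\<^sub>v us i"
  and on: "\<forall>i<k. \<forall>j<k. ip (us i) (us j) = (if i = j then 1 else 0)"
  shows "\<exists>y e. y \<in> carrier_vec n \<and> A *\<^sub>v y = of_real e \<cdot>\<^sub>v y \<and> ip y y = 1 \<and> (\<forall>i<k. ip (us i) y = 0)"
proof -
  have Ac: "A \<in> carrier_mat n n" and Ah: "\<And>a b. a<n \<Longrightarrow> b<n \<Longrightarrow> cnj (A$$(b,a)) = A$$(a,b)"
    using herm_carrier[OF A] herm_cnj[OF A] by auto
  have usc: "\<And>i. i < k \<Longrightarrow> us i \<in> carrier_vec n" using us by auto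
  have usd: "\<And>i. i < k \<Longrightarrow> dim_vec (us i) = n" using usc by auto
  define c where "c = (Re (mtr A) - (\<Sum>i<k. lam i)) / real (n - k) + 1"
  define Pm where "Pm = mat n n (\<lambda>(a,b). \<Sum>i<k. of_real (c - lam i) * us i $ a * cnj (us i $ b))"
  define B where "B = A + Pm"
  have Pmc: "Pm \<in> carrier_mat n n" unfolding Pm_def by auto
  have Bc: "B \<in> carrier_mat n n" unfolding B_def using Ac Pmc by auto
  have Pmv: "(Pm *\<^sub>v y) $ a = (\<Sum>i<k. of_real (c - lam i) * us i $ a * ip (us i) y)"
    if y: "y \<in> carrier_vec n" and a: "a < n" for y a
  proof -
    have "(Pm *\<^sub>v y) $ a = (\<Sum>b<n. (\<Sum>i<k. of_real (c - lam i) * us i $ a * cnj (us i $ b)) * y $ b)"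
      using mv_index[OF Pmc y a] a unfolding Pm_def by (auto intro!: sum.cong)
    also have "\<dots> = (\<Sum>i<k. \<Sum>b<n. of_real (c - lam i) * us i $ a * (cnj (us i $ b) * y $ b))"
      by (subst sum.swap) (simp add: sum_distrib_right mult.assoc)
    also have "\<dots> = (\<Sum>i<k. of_real (c - lam i) * us i $ a * ip (us i) y)"
      unfolding ip_def by (auto simp: usd sum_distrib_left intro!: sum.cong)
    finally show ?thesis .
  qed
  have Bv: "B *\<^sub>v y = A *\<^sub>v y + Pm *\<^sub>v y" if "y \<in> carrier_vec n" for y
    unfolding B_def by (rule add_mult_distrib_mat_vec[OF Ac Pmc that])
  have Bh: "herm n B" unfolding herm_def
  proof (intro conjI allI impI Bc)
    fix a b assume a: "a < n" and b: "b < n"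
    have "Pm $$ (a,b) = cnj (Pm $$ (b,a))" unfolding Pm_def using a b
      by (auto simp: mult.commute mult.left_commute)
    thus "B $$ (a,b) = cnj (B $$ (b,a))" unfolding B_def using a b Ac Pmc Ah by simp
  qed
  have Bu: "B *\<^sub>v us l = of_real c \<cdot>\<^sub>v us l" if l: "l < k" for l
  proof (rule eq_vecI)
    show "dim_vec (B *\<^sub>v us l) = dim_vec (of_real c \<cdot>\<^sub>v us l)" using Bc usc[OF l] by auto
    fix a assume "a < dim_vec (of_real c \<cdot>\<^sub>v us l)"
    hence a: "a < n" using usc[OF l] by auto
    have "(Pm *\<^sub>v us l) $ a = (\<Sum>i<k. of_real (c - lam i) * us i $ a * (if i = l then 1 else 0))"
      using Pmv[OF usc[OF l] a] on l by (auto intro!: sum.cong)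
    also have "\<dots> = of_real (c - lam l) * us l $ a" using l by (simp add: if_distrib sum.delta' cong: if_cong)
    finally have 1: "(Pm *\<^sub>v us l) $ a = of_real (c - lam l) * us l $ a" .
    have 2: "(A *\<^sub>v us l) $ a = of_real (lam l) * us l $ a" using us l a by auto
    show "(B *\<^sub>v us l) $ a = (of_real c \<cdot>\<^sub>v us l) $ a"
      unfolding Bv[OF usc[OF l]] using 1 2 a Ac Pmc usc[OF l]
      by (simp add: algebra_simps of_real_diff)
  qed
  have trB: "mtr B = mtr A + (\<Sum>i<k. of_real (c - lam i))"
  proof -
    have "mtr B = (\<Sum>a<n. A$$(a,a) + (\<Sum>i<k. of_real (c - lam i) * us i $ a * cnj (us i $ a)))"
      unfolding mtr_def B_def Pm_def using Ac by (auto intro!: sum.cong)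
    also have "\<dots> = mtr A + (\<Sum>a<n. \<Sum>i<k. of_real (c - lam i) * us i $ a * cnj (us i $ a))"
      unfolding mtr_def using Ac by (simp add: sum.distrib)
    also have "(\<Sum>a<n. \<Sum>i<k. of_real (c - lam i) * us i $ a * cnj (us i $ a)) = (\<Sum>i<k. \<Sum>a<n. of_real (c - lam i) * us i $ a * cnj (us i $ a))"
      by (rule sum.swap)
    also have "(\<Sum>i<k. \<Sum>a<n. of_real (c - lam i) * us i $ a * cnj (us i $ a)) = (\<Sum>i<k. of_real (c - lam i) * (\<Sum>a<n. cnj (us i $ a) * us i $ a))"
      by (auto simp: sum_distrib_left mult_ac intro!: sum.cong)
    also have "(\<Sum>i<k. of_real (c - lam i) * (\<Sum>a<n. cnj (us i $ a) * us i $ a)) = (\<Sum>i<k. of_real (c - lam i))"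
      using on usd by (auto simp: ip_def intro!: sum.cong)
    finally show ?thesis .
  qed
  have trne: "mtr B \<noteq> of_nat n * of_real c"
  proof
    assume "mtr B = of_nat n * of_real c"
    hence "Re (mtr A) + (\<Sum>i<k. (c - lam i)) = real n * c" unfolding trB
      by (metis Re_complex_of_real of_real_of_nat_eq of_real_sum plus_complex.sel(1) of_real_mult)
    hence "Re (mtr A) + real k * c - (\<Sum>i<k. lam i) = real n * c" by (simp add: sum_subtractf)
    hence "(real n - real k) * c = Re (mtr A) - (\<Sum>i<k. lam i)" by (simp add: algebra_simps)
    moreover have pos: "real n - real k > 0" using k by simp
    moreover have "real (n - k) = real n - real k" using k by simp
    hence "(real n - real k) * c = (Re (mtr A) - (\<Sum>i<k. lam i)) + (real n - real k)"
      unfolding c_def using pos by (simp add: field_simps)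
    ultimately show False by linarith
  qed
  obtain e where e: "eigenvalue B e" "e \<noteq> of_real c" using exists_other_eig[OF Bc trne] by blast
  obtain x where x: "x \<in> carrier_vec n" "x \<noteq> 0\<^sub>v n" "B *\<^sub>v x = e \<cdot>\<^sub>v x"
    using e(1) Bc unfolding eigenvalue_def eigenvector_def by auto
  have er: "e = of_real (Re e)" by (rule eig_real[OF Bh x])
  have orth: "ip (us l) x = 0" if l: "l < k" for l
  proof -
    have "e * ip (us l) x = ip (us l) (B *\<^sub>v x)" using x usd[OF l] by (simp add: ip_smult_right)
    also have "\<dots> = ip (B *\<^sub>v us l) x" by (rule herm_ip[OF Bh usc[OF l] x(1)])
    also have "\<dots> = of_real c * ip (us l) x" unfolding Bu[OF l] ip_smult_left by simp
    finally have "(e - of_real c) * ip (us l) x = 0" by (simp add: algebra_simps)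
    thus ?thesis using e(2) by simp
  qed
  have Pmx: "Pm *\<^sub>v x = 0\<^sub>v n"
    by (rule eq_vecI) (use Pmv[OF x(1)] orth Pmc in auto)
  have Ax: "A *\<^sub>v x = e \<cdot>\<^sub>v x" using Bv[OF x(1)] x(3) Pmx Ac x(1) by simp
  define r where "r = (\<Sum>i<dim_vec x. (cmod (x$i))^2)"
  have r: "r > 0" unfolding r_def by (rule ip_self_pos[OF x(1,2)])
  define s where "s = sqrt r"
  have s: "s > 0" "s * s = r" unfolding s_def using r by auto
  define y where "y = of_real (1/s) \<cdot>\<^sub>v x"
  have yc: "y \<in> carrier_vec n" unfolding y_def using x by auto
  have Ay: "A *\<^sub>v y = of_real (Re e) \<cdot>\<^sub>v y"
    unfolding y_def using Ac x(1) Ax er by (metis mult_mat_vec smult_smult_assoc mult.commute)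
  have ixx: "ip x x = of_real r" unfolding r_def by (rule ip_self)
  have "ip y y = cnj (of_real (1/s)) * (of_real (1/s) * ip x x)"
    unfolding y_def ip_smult_left using x(1) by (simp add: ip_smult_right)
  also have "\<dots> = of_real ((1/s) * ((1/s) * r))" unfolding ixx by simp
  also have "(1/s) * ((1/s) * r) = 1" using s r by (simp add: field_simps)
  finally have yy: "ip y y = 1" by simp
  have yo: "\<forall>i<k. ip (us i) y = 0"
    unfolding y_def using orth usd x(1) by (simp add: ip_smult_right)
  show ?thesis using yc Ay yy yo by blast
qed

lemma onb: assumes A: "herm n A" shows "k \<le> n \<Longrightarrow> \<exists>us lam. (\<forall>i<k. us i \<in> carrier_vec n \<and> A *\<^sub>v us i = of_real (lam i) \<cdot>\<^sub>v us i)
   \<and> (\<forall>i<k. \<forall>j<k. ip (us i) (us j) = (if i = j then 1 else 0))"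
proof (induction k)
  case 0 show ?case by auto
next
  case (Suc k)
  then obtain us lam where us: "\<forall>i<k. us i \<in> carrier_vec n \<and> A *\<^sub>v us i = of_real (lam i) \<cdot>\<^sub>v us i"
    and on: "\<forall>i<k. \<forall>j<k. ip (us i) (us j) = (if i = j then 1 else 0)" by auto
  have k: "k < n" using Suc by auto
  obtain y e where y: "y \<in> carrier_vec n" "A *\<^sub>v y = of_real e \<cdot>\<^sub>v y" "ip y y = 1" "\<forall>i<k. ip (us i) y = 0"
    using onb_step[OF A k us on] by blast
  define us' where "us' = us(k := y)"
  define lam' where "lam' = lam(k := e)"
  have 1: "\<forall>i<Suc k. us' i \<in> carrier_vec n \<and> A *\<^sub>v us' i = of_real (lam' i) \<cdot>\<^sub>v us' i"
    unfolding us'_def lam'_def using us y by (auto simp: less_Suc_eq)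
  have 2: "ip (us' i) (us' j) = (if i = j then 1 else 0)" if i: "i < Suc k" and j: "j < Suc k" for i j
  proof (cases "i = k")
    case True
    show ?thesis
    proof (cases "j = k")
      case True thus ?thesis using \<open>i = k\<close> y unfolding us'_def by simp
    next
      case False
      hence jk: "j < k" using j by simp
      have "ip y (us j) = cnj (ip (us j) y)" by (rule ip_cnj) (use y us jk in auto)
      thus ?thesis using \<open>i = k\<close> False y(4) jk unfolding us'_def by simp
    qed
  next
    case False
    hence ik: "i < k" using i by simp
    show ?thesis
    proof (cases "j = k")
      case True thus ?thesis using False y(4) ik unfolding us'_def by simp
    next
      case False
      thus ?thesis using \<open>i \<noteq> k\<close> on ik j unfolding us'_def by (simp add: less_Suc_eq)
    qed
  qed
  show ?case using 1 2 by blast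
qed

lemma spectral: assumes A: "herm n A"
  shows "\<exists>U lam. unitary n U \<and> A = U * dmat n (\<lambda>i. complex_of_real (lam i)) * adj U"
proof -
  obtain us lam where us: "\<forall>i<n. us i \<in> carrier_vec n \<and> A *\<^sub>v us i = of_real (lam i) \<cdot>\<^sub>v us i"
    and on: "\<forall>i<n. \<forall>j<n. ip (us i) (us j) = (if i = j then 1 else 0)"
    using onb[OF A, of n] by auto
  have Ac: "A \<in> carrier_mat n n" by (rule herm_carrier[OF A])
  define U where "U = mat n n (\<lambda>(a,i). us i $ a)"
  have Uc: "U \<in> carrier_mat n n" unfolding U_def by auto
  have colU: "col U i = us i" if "i < n" for i
    unfolding U_def using that us by (auto intro!: eq_vecI)
  have UU: "adj U * U = 1\<^sub>m n"
  proof (rule eq_matI)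
    fix i j assume "i < dim_row (1\<^sub>m n)" "j < dim_col (1\<^sub>m n)"
    hence i: "i < n" and j: "j < n" by auto
    have "(adj U * U) $$ (i,j) = (\<Sum>a = 0..<n. cnj (U $$ (a,i)) * U $$ (a,j))"
      using Uc i j by (auto simp: scalar_prod_def intro!: sum.cong)
    also have "\<dots> = ip (us i) (us j)" unfolding ip_def U_def using i j us
      by (auto simp: atLeast0LessThan intro!: sum.cong)
    finally show "(adj U * U) $$ (i,j) = 1\<^sub>m n $$ (i,j)" using on i j by simp
  qed (use Uc in auto)
  have UU2: "U * adj U = 1\<^sub>m n" by (rule mat_mult_left_right_inverse[OF _ Uc UU]) (use Uc in auto)
  define D where "D = dmat n (\<lambda>i. complex_of_real (lam i))"
  have AU: "A * U = U * D"
  proof (rule eq_matI)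
    fix a i assume "a < dim_row (U * D)" "i < dim_col (U * D)"
    hence a: "a < n" and i: "i < n" using Uc unfolding D_def by auto
    have "(A * U) $$ (a,i) = (A *\<^sub>v us i) $ a"
      using Ac Uc a i colU[OF i] by simp
    also have "\<dots> = of_real (lam i) * us i $ a" using us i a by auto
    also have "\<dots> = (U * D) $$ (a,i)"
    proof -
      have "(U * D) $$ (a,i) = (\<Sum>b = 0..<n. U $$ (a,b) * (if b = i then of_real (lam b) else 0))"
        unfolding D_def using Uc a i by (auto simp: scalar_prod_def intro!: sum.cong)
      also have "\<dots> = (\<Sum>b = 0..<n. if b = i then U $$ (a,b) * of_real (lam b) else 0)"
        by (rule sum.cong) auto
      also have "\<dots> = U $$ (a,i) * of_real (lam i)" using i by (simp add: sum.delta')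
      finally show ?thesis unfolding U_def using a i by simp
    qed
    finally show "(A * U) $$ (a,i) = (U * D) $$ (a,i)" .
  qed (use Uc Ac in \<open>auto simp: D_def\<close>)
  have "A = A * (U * adj U)" using Ac UU2 by simp
  also have "\<dots> = (A * U) * adj U" using Ac Uc by (simp add: assoc_mult_mat[symmetric, of A n n U n "adj U" n])
  also have "\<dots> = U * D * adj U" unfolding AU ..
  finally show ?thesis unfolding D_def unitary_def using Uc UU UU2 by blast
qed

lemma det_rank1: fixes a b :: "complex vec" assumes a: "a \<in> carrier_vec n" and b: "b \<in> carrier_vec n"
  shows "det (1\<^sub>m n - mat n n (\<lambda>(i,j). a$i * b$j)) = 1 - (\<Sum>i<n. b$i * a$i)"
proof -
  define s where "s = (\<Sum>i<n. b$i * a$i)"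
  define Ac where "Ac = mat n 1 (\<lambda>(i,j). a$i)"
  define Br where "Br = mat 1 n (\<lambda>(i,j). b$j)"
  define AB where "AB = mat n n (\<lambda>(i,j). a$i * b$j)"
  have c: "Ac \<in> carrier_mat n 1" "Br \<in> carrier_mat 1 n" "AB \<in> carrier_mat n n" unfolding Ac_def Br_def AB_def by auto
  define M1 where "M1 = four_block_mat (1\<^sub>m n - AB) Ac (0\<^sub>m 1 n) (1\<^sub>m 1)"
  define M2 where "M2 = four_block_mat (1\<^sub>m n) (0\<^sub>m n 1) Br (1\<^sub>m 1)"
  define M3 where "M3 = four_block_mat (1\<^sub>m n) Ac (0\<^sub>m 1 n) (mat 1 1 (\<lambda>_. 1 - s))"
  have "det M1 = det (1\<^sub>m n - AB) * det (1\<^sub>m 1 :: complex mat)" unfolding M1_def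
    by (rule det_four_block_mat_lower_left_zero) (use c in auto)
  hence d1: "det M1 = det (1\<^sub>m n - AB)" by simp
  have "det M2 = det (1\<^sub>m n :: complex mat) * det (1\<^sub>m 1 :: complex mat)" unfolding M2_def
    by (rule det_four_block_mat_upper_right_zero) (use c in auto)
  hence d2: "det M2 = 1" by simp
  have d11: "det (mat 1 1 (\<lambda>_. 1 - s)) = 1 - s"
    by (subst det_upper_triangular[of _ 1]) (auto simp: upper_triangular_def diag_mat_def)
  have "det M3 = det (1\<^sub>m n :: complex mat) * det (mat 1 1 (\<lambda>_. 1 - s))" unfolding M3_def
    by (rule det_four_block_mat_lower_left_zero) (use c in auto)
  hence d3: "det M3 = 1 - s" using d11 by simp
  have ABe: "Ac * Br = AB" unfolding Ac_def Br_def AB_def by (rule eq_matI) (auto simp: scalar_prod_def)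
  have BAe: "Br * Ac = mat 1 1 (\<lambda>_. s)" unfolding Ac_def Br_def s_def
    by (rule eq_matI) (auto simp: scalar_prod_def atLeast0LessThan)
  have "M1 * M2 = four_block_mat ((1\<^sub>m n - AB) * 1\<^sub>m n + Ac * Br) ((1\<^sub>m n - AB) * 0\<^sub>m n 1 + Ac * 1\<^sub>m 1)
     (0\<^sub>m 1 n * 1\<^sub>m n + 1\<^sub>m 1 * Br) (0\<^sub>m 1 n * 0\<^sub>m n 1 + 1\<^sub>m 1 * 1\<^sub>m 1)"
    unfolding M1_def M2_def by (rule mult_four_block_mat) (use c in auto)
  also have "\<dots> = four_block_mat (1\<^sub>m n) Ac Br (1\<^sub>m 1)"
  proof -
    have "(1\<^sub>m n - AB) * 1\<^sub>m n + Ac * Br = 1\<^sub>m n" unfolding ABe using c by (intro eq_matI) auto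
    moreover have "(1\<^sub>m n - AB) * 0\<^sub>m n 1 + Ac * 1\<^sub>m 1 = Ac" using c by (intro eq_matI) auto
    moreover have "0\<^sub>m 1 n * 1\<^sub>m n + 1\<^sub>m 1 * Br = Br" using c by (intro eq_matI) auto
    moreover have "0\<^sub>m 1 n * 0\<^sub>m n 1 + 1\<^sub>m 1 * 1\<^sub>m 1 = (1\<^sub>m 1 :: complex mat)" by (intro eq_matI) auto
    ultimately show ?thesis by simp
  qed
  finally have e1: "M1 * M2 = four_block_mat (1\<^sub>m n) Ac Br (1\<^sub>m 1)" .
  have "M2 * M3 = four_block_mat (1\<^sub>m n * 1\<^sub>m n + 0\<^sub>m n 1 * 0\<^sub>m 1 n) (1\<^sub>m n * Ac + 0\<^sub>m n 1 * mat 1 1 (\<lambda>_. 1 - s))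
     (Br * 1\<^sub>m n + 1\<^sub>m 1 * 0\<^sub>m 1 n) (Br * Ac + 1\<^sub>m 1 * mat 1 1 (\<lambda>_. 1 - s))"
    unfolding M2_def M3_def by (rule mult_four_block_mat) (use c in auto)
  also have "\<dots> = four_block_mat (1\<^sub>m n) Ac Br (1\<^sub>m 1)"
  proof -
    have "1\<^sub>m n * 1\<^sub>m n + 0\<^sub>m n 1 * 0\<^sub>m 1 n = (1\<^sub>m n :: complex mat)" by (intro eq_matI) auto
    moreover have "1\<^sub>m n * Ac + 0\<^sub>m n 1 * mat 1 1 (\<lambda>_. 1 - s) = Ac" using c by (intro eq_matI) auto
    moreover have "Br * 1\<^sub>m n + 1\<^sub>m 1 * 0\<^sub>m 1 n = Br" using c by (intro eq_matI) auto
    moreover have "Br * Ac + 1\<^sub>m 1 * mat 1 1 (\<lambda>_. 1 - s) = 1\<^sub>m 1" unfolding BAe by (intro eq_matI) auto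
    ultimately show ?thesis by simp
  qed
  finally have e2: "M2 * M3 = four_block_mat (1\<^sub>m n) Ac Br (1\<^sub>m 1)" .
  have M1c: "M1 \<in> carrier_mat (n+1) (n+1)" "M2 \<in> carrier_mat (n+1) (n+1)" "M3 \<in> carrier_mat (n+1) (n+1)"
    unfolding M1_def M2_def M3_def using c by auto
  have "det (1\<^sub>m n - AB) = det M1 * det M2" using d1 d2 by simp
  also have "\<dots> = det (M1 * M2)" by (rule det_mult[symmetric]) (use M1c in auto)
  also have "\<dots> = det (M2 * M3)" using e1 e2 by simp
  also have "\<dots> = det M2 * det M3" by (rule det_mult) (use M1c in auto)
  finally show ?thesis using d2 d3 unfolding AB_def s_def by simp
qed

lemma ip_adj: assumes M: "M \<in> carrier_mat n n" and x: "x \<in> carrier_vec n" and y: "y \<in> carrier_vec n"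
  shows "ip x (M *\<^sub>v y) = ip (adj M *\<^sub>v x) y"
proof -
  have aM: "adj M \<in> carrier_mat n n" using M by auto
  have dx: "dim_vec x = n" and dMx: "dim_vec (adj M *\<^sub>v x) = n" using x M by auto
  have "ip x (M *\<^sub>v y) = (\<Sum>a<n. cnj (x$a) * (\<Sum>b<n. M$$(a,b) * y$b))"
    unfolding ip_def dx by (rule sum.cong[OF refl]) (simp add: mv_index[OF M y])
  also have "\<dots> = (\<Sum>a<n. \<Sum>b<n. cnj (x$a) * M$$(a,b) * y$b)"
    by (simp add: sum_distrib_left mult.assoc)
  also have "\<dots> = (\<Sum>b<n. \<Sum>a<n. cnj (x$a) * M$$(a,b) * y$b)"
    by (rule sum.swap)
  also have "\<dots> = (\<Sum>b<n. \<Sum>a<n. cnj (adj M $$ (b,a) * x$a) * y$b)"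
  proof (rule sum.cong[OF refl], rule sum.cong[OF refl])
    fix b a assume "b \<in> {..<n}" "a \<in> {..<n}"
    hence "adj M $$ (b,a) = cnj (M$$(a,b))" using M by auto
    thus "cnj (x$a) * M$$(a,b) * y$b = cnj (adj M $$ (b,a) * x$a) * y$b" by simp
  qed
  also have "\<dots> = (\<Sum>b<n. cnj (\<Sum>a<n. adj M $$ (b,a) * x$a) * y$b)"
    by (simp add: sum_distrib_right cnj_sum)
  also have "\<dots> = ip (adj M *\<^sub>v x) y"
    unfolding ip_def dMx by (rule sum.cong[OF refl]) (simp add: mv_index[OF aM x])
  finally show ?thesis .
qed

lemma dmat_mv: "w \<in> carrier_vec n \<Longrightarrow> i < n \<Longrightarrow> (dmat n f *\<^sub>v w) $ i = f i * w $ i"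
proof -
  assume w: "w \<in> carrier_vec n" and i: "i < n"
  have "(dmat n f *\<^sub>v w) $ i = (\<Sum>b<n. (if i = b then f i else 0) * w$b)"
    using mv_index[OF dmat_carrier w i] i by simp
  also have "\<dots> = (\<Sum>b<n. if b = i then f i * w$b else 0)" by (rule sum.cong) auto
  also have "\<dots> = f i * w $ i" using i by (simp add: sum.delta')
  finally show ?thesis .
qed

lemma quad_udu: assumes U: "unitary n U" and v: "v \<in> carrier_vec n"
  shows "ip v ((U * dmat n f * adj U) *\<^sub>v v) = (\<Sum>i<n. f i * of_real ((cmod ((adj U *\<^sub>v v) $ i))^2))"
proof -
  have Uc: "U \<in> carrier_mat n n" and aU: "adj U \<in> carrier_mat n n" using U unfolding unitary_def by auto
  define w where "w = adj U *\<^sub>v v"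
  have wc: "w \<in> carrier_vec n" unfolding w_def using aU v by auto
  have "(U * dmat n f * adj U) *\<^sub>v v = (U * dmat n f) *\<^sub>v w"
    unfolding w_def by (rule assoc_mult_mat_vec) (use Uc aU v in auto)
  also have "\<dots> = U *\<^sub>v (dmat n f *\<^sub>v w)"
    by (rule assoc_mult_mat_vec) (use Uc wc in auto)
  finally have "(U * dmat n f * adj U) *\<^sub>v v = U *\<^sub>v (dmat n f *\<^sub>v w)" .
  moreover have "dmat n f *\<^sub>v w \<in> carrier_vec n" unfolding carrier_vec_def by simp
  ultimately have "ip v ((U * dmat n f * adj U) *\<^sub>v v) = ip w (dmat n f *\<^sub>v w)"
    using ip_adj[OF Uc v] unfolding w_def by simp
  also have "\<dots> = (\<Sum>i<n. cnj (w$i) * (f i * w$i))"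
    unfolding ip_def using wc dmat_mv[OF wc] by (auto intro!: sum.cong)
  also have "\<dots> = (\<Sum>i<n. f i * of_real ((cmod (w $ i))^2))"
    by (rule sum.cong[OF refl]) (metis complex_norm_square of_real_power mult.commute mult.left_commute)
  finally show ?thesis unfolding w_def .
qed

lemma norm_adj: assumes U: "unitary n U" and v: "v \<in> carrier_vec n"
  shows "(\<Sum>i<n. (cmod ((adj U *\<^sub>v v) $ i))^2) = (\<Sum>a<n. (cmod (v $ a))^2)"
proof -
  have "ip v ((U * dmat n (\<lambda>i. 1) * adj U) *\<^sub>v v) = ip v v" using udu_one[OF U] v by simp
  hence "(\<Sum>i<n. of_real ((cmod ((adj U *\<^sub>v v) $ i))^2)) = (of_real (\<Sum>a<n. (cmod (v $ a))^2) :: complex)"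
    unfolding quad_udu[OF U v] ip_self using v by simp
  thus ?thesis by (metis of_real_eq_iff of_real_sum)
qed

lemma re_quad_udu: assumes U: "unitary n U" and v: "v \<in> carrier_vec n"
  shows "Re (ip v ((U * dmat n (\<lambda>i. of_real (f i)) * adj U) *\<^sub>v v)) = (\<Sum>i<n. f i * (cmod ((adj U *\<^sub>v v) $ i))^2)"
  unfolding quad_udu[OF U v] Re_sum by simp

lemma outer_carrier[simp]: "dim_vec w = n \<Longrightarrow> outer w \<in> carrier_mat n n"
  unfolding outer_def by auto

lemma outer_mv: assumes "w \<in> carrier_vec n" "x \<in> carrier_vec n" "a < n"
  shows "(outer w *\<^sub>v x) $ a = w $ a * ip w x"
proof -
  have "(outer w *\<^sub>v x) $ a = (\<Sum>b<n. w$a * cnj (w$b) * x$b)"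
    using mv_index[OF outer_carrier[of w n] assms(2,3)] assms unfolding outer_def by auto
  also have "\<dots> = w $ a * (\<Sum>b<n. cnj (w$b) * x$b)" by (simp add: sum_distrib_left mult.assoc)
  also have "(\<Sum>b<n. cnj (w$b) * x$b) = ip w x" unfolding ip_def using assms by simp
  finally show ?thesis .
qed

lemma outer_quad: assumes "w \<in> carrier_vec n" "x \<in> carrier_vec n"
  shows "ip x (outer w *\<^sub>v x) = of_real ((cmod (ip w x))^2)"
proof -
  have "ip x (outer w *\<^sub>v x) = (\<Sum>a<n. cnj (x$a) * (w $ a * ip w x))"
    unfolding ip_def[of x "outer w *\<^sub>v x"] using assms outer_mv[OF assms] by (auto intro!: sum.cong)
  also have "\<dots> = (\<Sum>a<n. cnj (x$a) * w $ a) * ip w x" by (simp add: sum_distrib_right mult.assoc)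
  also have "(\<Sum>a<n. cnj (x$a) * w $ a) = ip x w" unfolding ip_def using assms by simp
  also have "ip x w = cnj (ip w x)" by (rule ip_cnj) (use assms in auto)
  finally show ?thesis by (metis complex_norm_square of_real_power mult.commute)
qed

lemma herm_outer: "dim_vec w = n \<Longrightarrow> herm n (outer w)"
  unfolding herm_def outer_def by auto

lemma herm_add: assumes "herm n A" "herm n B" shows "herm n (A + B)"
proof -
  have c: "A \<in> carrier_mat n n" "B \<in> carrier_mat n n" using assms herm_carrier by auto
  show ?thesis unfolding herm_def
  proof (intro conjI allI impI)
    show "A + B \<in> carrier_mat n n" using c by auto
    fix a b assume ab: "a < n" "b < n"
    have "cnj (A$$(b,a)) = A$$(a,b)" "cnj (B$$(b,a)) = B$$(a,b)" using herm_cnj assms ab by auto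
    thus "(A + B) $$ (a,b) = cnj ((A + B) $$ (b,a))" using c ab by simp
  qed
qed

lemma msum_carrier: "(\<And>k. k < m \<Longrightarrow> f k \<in> carrier_mat d d) \<Longrightarrow> msum d f m \<in> carrier_mat d d"
  by (induction m) auto

lemma ip_msum: assumes "\<And>k. k < m \<Longrightarrow> f k \<in> carrier_mat d d" "x \<in> carrier_vec d"
  shows "ip x (msum d f m *\<^sub>v x) = (\<Sum>k<m. ip x (f k *\<^sub>v x))"
  using assms(1)
proof (induction m)
  case 0
  have "ip x (0\<^sub>m d d *\<^sub>v x) = 0" unfolding ip_def using assms(2) by simp
  thus ?case by simp
next
  case (Suc m)
  have c: "msum d f m \<in> carrier_mat d d" "f m \<in> carrier_mat d d" using Suc msum_carrier by auto
  have "msum d f (Suc m) *\<^sub>v x = msum d f m *\<^sub>v x + f m *\<^sub>v x"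
    using add_mult_distrib_mat_vec[OF c assms(2)] by simp
  hence "ip x (msum d f (Suc m) *\<^sub>v x) = ip x (msum d f m *\<^sub>v x) + ip x (f m *\<^sub>v x)"
    unfolding ip_def using c assms(2) by (simp add: sum.distrib distrib_left)
  thus ?case using Suc by simp
qed

lemma cmod_ip_le: assumes "dim_vec x = n" "dim_vec y = n"
  shows "cmod (ip x y) \<le> ((\<Sum>a<n. (cmod (x$a))^2) + (\<Sum>a<n. (cmod (y$a))^2)) / 2"
proof -
  have "cmod (ip x y) \<le> (\<Sum>a<n. cmod (cnj (x$a) * y$a))" unfolding ip_def assms(1) by (rule norm_sum)
  also have "\<dots> \<le> (\<Sum>a<n. ((cmod (x$a))^2 + (cmod (y$a))^2) / 2)"
  proof (rule sum_mono)
    fix a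
    have "0 \<le> (cmod (x$a) - cmod (y$a))^2" by simp
    thus "cmod (cnj (x$a) * y$a) \<le> ((cmod (x$a))^2 + (cmod (y$a))^2) / 2"
      by (simp add: norm_mult power2_eq_square algebra_simps)
  qed
  also have "\<dots> = ((\<Sum>a<n. (cmod (x$a))^2) + (\<Sum>a<n. (cmod (y$a))^2)) / 2"
    by (simp only: sum_divide_distrib[symmetric] sum.distrib)
  finally show ?thesis .
qed

lemma trlog0: assumes "M \<in> carrier_mat 0 0" shows "trlog M = 0"
proof -
  obtain as where "char_poly M = (\<Prod>a\<leftarrow>as. [:- a, 1:])" "length as = 0"
    using char_poly_factorized[OF assms] by blast
  hence "char_poly M = 1" by simp
  thus ?thesis unfolding trlog_def eigs_def by simp
qed

lemma minv_carrier: assumes "M \<in> carrier_mat n n" shows "minv M \<in> carrier_mat n n"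
proof (cases "mat_inverse M")
  case None thus ?thesis unfolding minv_def using assms by auto
next
  case (Some N) thus ?thesis unfolding minv_def using mat_inverse(2)[OF assms Some] by auto
qed

lemma msum_index: assumes "\<And>k. k < m \<Longrightarrow> dim_vec (v k) = d" "a < d" "b < d"
  shows "msum d (\<lambda>i. outer (v i)) m $$ (a,b) = (\<Sum>k<m. v k $ a * cnj (v k $ b))"
  using assms(1)
proof (induction m)
  case 0 thus ?case using assms by simp
next
  case (Suc m)
  have c: "msum d (\<lambda>i. outer (v i)) m \<in> carrier_mat d d" by (rule msum_carrier) (use Suc in auto)
  have "msum d (\<lambda>i. outer (v i)) (Suc m) $$ (a,b) = msum d (\<lambda>i. outer (v i)) m $$ (a,b) + outer (v m) $$ (a,b)"
  proof -
    have dm: "dim_vec (v m) = d" using Suc.prems by simp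
    show ?thesis using c assms dm by (simp add: outer_def)
  qed
  also have "outer (v m) $$ (a,b) = v m $ a * cnj (v m $ b)" unfolding outer_def using assms Suc.prems[of m] by simp
  finally show ?case using Suc by simp
qed

lemma jensen_ln: fixes p y :: "'a \<Rightarrow> real" assumes "finite I" "\<And>i. i \<in> I \<Longrightarrow> p i \<ge> 0" "(\<Sum>i\<in>I. p i) = 1"
  "\<And>i. i \<in> I \<Longrightarrow> y i > 0"
  shows "(\<Sum>i\<in>I. p i * ln (y i)) \<le> ln (\<Sum>i\<in>I. p i * y i)"
proof -
  define Y where "Y = (\<Sum>i\<in>I. p i * y i)"
  have "Y > 0"
  proof -
    have "I \<noteq> {}" using assms(3) by auto
    then obtain i0 where i0: "i0 \<in> I" "p i0 \<noteq> 0" using assms(3) by (metis sum.neutral zero_neq_one)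
    have "Y \<ge> p i0 * y i0" unfolding Y_def
      by (rule member_le_sum[of i0 I "\<lambda>i. p i * y i"]) (use assms i0 in \<open>auto intro: mult_nonneg_nonneg less_imp_le\<close>)
    moreover have "p i0 * y i0 > 0" using assms i0 by (metis less_eq_real_def mult_pos_pos)
    ultimately show ?thesis by linarith
  qed
  have "(\<Sum>i\<in>I. p i * (ln (y i) - ln Y)) \<le> (\<Sum>i\<in>I. p i * (y i / Y - 1))"
  proof (rule sum_mono)
    fix i assume i: "i \<in> I"
    have "ln (y i) - ln Y = ln (y i / Y)" using assms(4)[OF i] \<open>Y > 0\<close> by (simp add: ln_div)
    also have "\<dots> \<le> y i / Y - 1" by (rule ln_le_minus_one) (use assms(4)[OF i] \<open>Y > 0\<close> in auto)
    finally show "p i * (ln (y i) - ln Y) \<le> p i * (y i / Y - 1)" using assms(2)[OF i] by (rule mult_left_mono)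
  qed
  also have "\<dots> = Y / Y - 1" unfolding Y_def using assms(3)
    by (simp add: right_diff_distrib sum_subtractf sum_divide_distrib[symmetric] mult.assoc)
  also have "\<dots> = 0" using \<open>Y > 0\<close> by simp
  finally have "(\<Sum>i\<in>I. p i * ln (y i)) - (\<Sum>i\<in>I. p i) * ln Y \<le> 0"
    by (simp add: right_diff_distrib sum_subtractf sum_distrib_right)
  thus ?thesis using assms(3) unfolding Y_def by simp
qed

lemma det_minus_outer: assumes Q: "Q \<in> carrier_mat n n" and R: "R \<in> carrier_mat n n" and QR: "Q * R = 1\<^sub>m n"
  and w: "w \<in> carrier_vec n"
  shows "det (Q - outer w) = det Q * (1 - ip w (R *\<^sub>v w))"
proof -
  define z where "z = R *\<^sub>v w"
  have zc: "z \<in> carrier_vec n" unfolding z_def using R w by auto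
  define b where "b = vec n (\<lambda>j. cnj (w $ j))"
  have bc: "b \<in> carrier_vec n" unfolding b_def by auto
  define Rk where "Rk = mat n n (\<lambda>(i,j). z$i * b$j)"
  have Rkc: "Rk \<in> carrier_mat n n" unfolding Rk_def by auto
  have Qz: "Q *\<^sub>v z = w" unfolding z_def using assoc_mult_mat_vec[OF Q R w, symmetric] QR w by simp
  have QRk: "Q * Rk = outer w"
  proof (rule eq_matI)
    fix a c assume "a < dim_row (outer w)" "c < dim_col (outer w)"
    hence a: "a < n" and c: "c < n" using w unfolding outer_def by auto
    have "(Q * Rk) $$ (a,c) = (\<Sum>k<n. Q$$(a,k) * (z$k * b$c))"
      using Q Rkc a c unfolding Rk_def by (auto simp: scalar_prod_def atLeast0LessThan intro!: sum.cong)
    also have "\<dots> = (\<Sum>k<n. Q$$(a,k) * z$k) * b$c" by (simp add: sum_distrib_right mult.assoc)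
    also have "(\<Sum>k<n. Q$$(a,k) * z$k) = w $ a" using mv_index[OF Q zc a] Qz by simp
    finally show "(Q * Rk) $$ (a,c) = outer w $$ (a,c)" unfolding outer_def b_def using a c w by simp
  qed (use Q w Rkc in \<open>auto simp: outer_def\<close>)
  have "Q * (1\<^sub>m n - Rk) = Q * (1\<^sub>m n + (- Rk))"
    using Rkc by (simp add: minus_add_uminus_mat[of "1\<^sub>m n" n n Rk])
  also have "\<dots> = Q * 1\<^sub>m n + Q * (- Rk)" by (rule mult_add_distrib_mat) (use Q Rkc in auto)
  also have "\<dots> = Q + (- outer w)" using Q Rkc QRk uminus_mult_right_mat[of Q Rk] by simp
  also have "\<dots> = Q - outer w" using Q w by (simp add: minus_add_uminus_mat[of Q n n "outer w"])
  finally have "Q - outer w = Q * (1\<^sub>m n - Rk)" by simp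
  moreover have "1\<^sub>m n - Rk \<in> carrier_mat n n" using Rkc by auto
  ultimately have "det (Q - outer w) = det Q * det (1\<^sub>m n - Rk)" using det_mult[OF Q] by simp
  also have "det (1\<^sub>m n - Rk) = 1 - (\<Sum>i<n. b$i * z$i)" unfolding Rk_def by (rule det_rank1[OF zc bc])
  also have "(\<Sum>i<n. b$i * z$i) = ip w z" unfolding ip_def b_def using w by simp
  finally show ?thesis unfolding z_def .
qed

lemma adj_col: assumes "U \<in> carrier_mat n n" "y \<in> carrier_vec n" "i < n"
  shows "(adj U *\<^sub>v y) $ i = ip (col U i) y"
  unfolding ip_def using assms mv_index[of "adj U" n y i] by auto

lemma col_norm: assumes "unitary n V" "i < n" shows "(\<Sum>a<n. (cmod (col V i $ a))^2) = 1"
proof -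
  have Vc: "V \<in> carrier_mat n n" using assms unfolding unitary_def by auto
  have "(\<Sum>a<n. cnj (V$$(a,i)) * V$$(a,i)) = 1" using unitary_cols[OF assms(1) assms(2) assms(2)] by simp
  moreover have "(of_real (\<Sum>a<n. (cmod (col V i $ a))^2) :: complex) = (\<Sum>a<n. cnj (V$$(a,i)) * V$$(a,i))"
    unfolding of_real_sum
  proof (rule sum.cong[OF refl])
    fix a assume "a \<in> {..<n}"
    hence "col V i $ a = V $$ (a,i)" using Vc assms(2) by simp
    thus "(of_real ((cmod (col V i $ a))^2) :: complex) = cnj (V$$(a,i)) * V$$(a,i)"
      by (metis complex_norm_square mult.commute)
  qed
  ultimately have "(of_real (\<Sum>a<n. (cmod (col V i $ a))^2) :: complex) = 1" by simp
  thus ?thesis by (metis of_real_eq_1_iff)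
qed

lemma col_eig: assumes V: "unitary n V" and i: "i < n"
  shows "Re (ip (col V i) ((V * dmat n (\<lambda>l. of_real (nu l)) * adj V) *\<^sub>v col V i)) = nu i"
proof -
  have Vc: "V \<in> carrier_mat n n" using V unfolding unitary_def by auto
  have cc: "col V i \<in> carrier_vec n" using Vc i by auto
  have w: "(adj V *\<^sub>v col V i) $ l = (if l = i then 1 else 0)" if l: "l < n" for l
  proof -
    have "(adj V *\<^sub>v col V i) $ l = (adj V * V) $$ (l,i)" using Vc l i by simp
    also have "\<dots> = (if l = i then 1 else 0)" using V l i unfolding unitary_def by simp
    finally show ?thesis .
  qed
  have "Re (ip (col V i) ((V * dmat n (\<lambda>l. of_real (nu l)) * adj V) *\<^sub>v col V i)) = (\<Sum>l<n. nu l * (cmod ((adj V *\<^sub>v col V i) $ l))^2)"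
    by (rule re_quad_udu[OF V cc])
  also have "\<dots> = (\<Sum>l<n. if l = i then nu l else 0)" by (rule sum.cong[OF refl]) (simp add: w)
  also have "\<dots> = nu i" using i by (simp add: sum.delta')
  finally show ?thesis .
qed

lemma ip_add_right: "dim_vec y = dim_vec x \<Longrightarrow> dim_vec z = dim_vec x \<Longrightarrow> ip x (y + z) = ip x y + ip x z"
  unfolding ip_def by (simp add: sum.distrib distrib_left)

lemma re_inv_diff: "Re (1 / (complex_of_real a - complex_of_real b)) = 1 / (a - b)"
proof -
  have "1 / (complex_of_real a - complex_of_real b) = complex_of_real (1 / (a - b))" by simp
  thus ?thesis by (metis Re_complex_of_real)
qed

lemma herm_udu: assumes "unitary n U" shows "herm n (U * dmat n (\<lambda>i. complex_of_real (f i)) * adj U)"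
proof -
  have Uc: "U \<in> carrier_mat n n" using assms unfolding unitary_def by auto
  show ?thesis unfolding herm_def
  proof (intro conjI allI impI)
    show "U * dmat n (\<lambda>i. complex_of_real (f i)) * adj U \<in> carrier_mat n n" using Uc by auto
    fix a b assume ab: "a < n" "b < n"
    show "(U * dmat n (\<lambda>i. complex_of_real (f i)) * adj U) $$ (a,b) = cnj ((U * dmat n (\<lambda>i. complex_of_real (f i)) * adj U) $$ (b,a))"
      unfolding udu_index[OF Uc ab] udu_index[OF Uc ab(2) ab(1)] cnj_sum
      by (rule sum.cong) (auto simp: mult_ac)
  qed
qed

lemma phi_update:
  assumes U: "unitary d U" and Aeq: "A = U * dmat d (\<lambda>i. complex_of_real (lam i)) * adj U"
  and lm: "\<And>i. i < d \<Longrightarrow> lam i \<le> lm" and gap: "uh - lm \<ge> 1/3"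
  and w: "w \<in> carrier_vec d" and sq: "(\<Sum>a<d. (cmod (w$a))^2) = \<alpha>" and al: "\<alpha> \<le> 1/221"
  shows "Phi d uh (A + outer w) = - ((\<Sum>i<d. ln (uh - lam i)) + ln (1 - (\<Sum>i<d. (cmod ((adj U *\<^sub>v w)$i))^2 / (uh - lam i))))
     \<and> 1 - (\<Sum>i<d. (cmod ((adj U *\<^sub>v w)$i))^2 / (uh - lam i)) > 0"
proof -
  define xk where "xk = (\<Sum>i<d. (cmod ((adj U *\<^sub>v w)$i))^2 / (uh - lam i))"
  have Uc: "U \<in> carrier_mat d d" using U unfolding unitary_def by auto
  have Ah: "herm d A" unfolding Aeq by (rule herm_udu[OF U])
  have Ac: "A \<in> carrier_mat d d" by (rule herm_carrier[OF Ah])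
  have dw: "dim_vec w = d" using w by auto
  have Akh: "herm d (A + outer w)" by (rule herm_add[OF Ah herm_outer[OF dw]])
  obtain V nu where V: "unitary d V" and Vk: "A + outer w = V * dmat d (\<lambda>i. complex_of_real (nu i)) * adj V"
    using spectral[OF Akh] by blast
  have Vc: "V \<in> carrier_mat d d" using V unfolding unitary_def by auto
  have qpos: "uh - lam i \<ge> 1/3" if "i < d" for i using lm[OF that] gap by linarith
  have al0: "\<alpha> \<ge> 0" unfolding sq[symmetric] by (rule sum_nonneg) auto
  have nu_lt: "nu i < uh" if i: "i < d" for i
  proof -
    define x where "x = col V i"
    have xc: "x \<in> carrier_vec d" unfolding x_def using Vc i by auto
    have xn: "(\<Sum>a<d. (cmod (x$a))^2) = 1" unfolding x_def by (rule col_norm[OF V i])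
    have "nu i = Re (ip x ((A + outer w) *\<^sub>v x))" unfolding x_def Vk by (rule col_eig[OF V i, symmetric])
    also have "(A + outer w) *\<^sub>v x = A *\<^sub>v x + outer w *\<^sub>v x"
      by (rule add_mult_distrib_mat_vec) (use Ac dw xc in auto)
    also have "ip x (A *\<^sub>v x + outer w *\<^sub>v x) = ip x (A *\<^sub>v x) + ip x (outer w *\<^sub>v x)"
      by (rule ip_add_right) (use Ac dw xc in \<open>auto simp: outer_def\<close>)
    finally have nu: "nu i = Re (ip x (A *\<^sub>v x)) + Re (ip x (outer w *\<^sub>v x))" by simp
    have "Re (ip x (A *\<^sub>v x)) = (\<Sum>l<d. lam l * (cmod ((adj U *\<^sub>v x) $ l))^2)"
      unfolding Aeq by (rule re_quad_udu[OF U xc])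
    also have "\<dots> \<le> (\<Sum>l<d. lm * (cmod ((adj U *\<^sub>v x) $ l))^2)"
      by (rule sum_mono) (use lm in \<open>auto intro: mult_right_mono\<close>)
    also have "\<dots> = lm * (\<Sum>l<d. (cmod ((adj U *\<^sub>v x) $ l))^2)" by (simp add: sum_distrib_left)
    also have "\<dots> = lm" using norm_adj[OF U xc] xn by simp
    finally have 1: "Re (ip x (A *\<^sub>v x)) \<le> lm" .
    have "Re (ip x (outer w *\<^sub>v x)) = (cmod (ip w x))^2" using outer_quad[OF w xc] by simp
    also have "cmod (ip w x) \<le> (\<alpha> + 1) / 2" using cmod_ip_le[of w d x] dw xc sq xn by auto
    hence "(cmod (ip w x))^2 \<le> ((\<alpha> + 1) / 2)^2" by (rule power_mono) simp
    finally have 2: "Re (ip x (outer w *\<^sub>v x)) \<le> ((\<alpha> + 1) / 2)^2" .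
    have "((\<alpha> + 1) / 2)^2 \<le> ((1/221 + 1) / 2)^2" by (rule power_mono) (use al al0 in auto)
    moreover have "((1/221 + 1) / 2)^2 < (1/3::real)" by (simp add: power2_eq_square)
    ultimately have 3: "((\<alpha> + 1) / 2)^2 < 1/3" by linarith
    show ?thesis using nu 1 2 3 gap by linarith
  qed
  have dQ: "of_real uh \<cdot>\<^sub>m 1\<^sub>m d - A = U * dmat d (\<lambda>i. of_real uh - of_real (lam i)) * adj U"
    unfolding Aeq by (rule udu_minus[OF U])
  define Qi where "Qi = U * dmat d (\<lambda>i. 1 / (of_real uh - of_real (lam i))) * adj U"
  have Qic: "Qi \<in> carrier_mat d d" unfolding Qi_def using Uc by auto
  have QQi: "(of_real uh \<cdot>\<^sub>m 1\<^sub>m d - A) * Qi = 1\<^sub>m d"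
  proof -
    have "dmat d (\<lambda>i. (of_real uh - of_real (lam i)) * (1 / (of_real uh - of_real (lam i)))) = dmat d (\<lambda>i. (1::complex))"
    proof (rule eq_matI)
      fix i j assume "i < dim_row (dmat d (\<lambda>i. (1::complex)))" "j < dim_col (dmat d (\<lambda>i. (1::complex)))"
      hence i: "i < d" and j: "j < d" by auto
      have "uh - lam i \<noteq> 0" using qpos[OF i] by linarith
      hence "(of_real uh - of_real (lam i) :: complex) \<noteq> 0" by (metis of_real_diff of_real_eq_0_iff)
      thus "dmat d (\<lambda>i. (of_real uh - of_real (lam i)) * (1 / (of_real uh - of_real (lam i)))) $$ (i,j) = dmat d (\<lambda>i. (1::complex)) $$ (i,j)"
        using i j by (cases "i = j") auto
    qed auto
    thus ?thesis unfolding dQ Qi_def udu_mult[OF U] using udu_one[OF U] by simp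
  qed
  have eqk: "of_real uh \<cdot>\<^sub>m 1\<^sub>m d - (A + outer w) = (of_real uh \<cdot>\<^sub>m 1\<^sub>m d - A) - outer w"
    by (rule eq_matI) (use Ac dw in \<open>auto simp: outer_def\<close>)
  have "det (of_real uh \<cdot>\<^sub>m 1\<^sub>m d - (A + outer w)) = det (of_real uh \<cdot>\<^sub>m 1\<^sub>m d - A) * (1 - ip w (Qi *\<^sub>v w))"
    unfolding eqk by (rule det_minus_outer[OF _ Qic QQi w]) (use Ac in auto)
  also have "det (of_real uh \<cdot>\<^sub>m 1\<^sub>m d - A) = of_real (\<Prod>i<d. uh - lam i)"
    unfolding dQ det_diag[OF U] by simp
  also have "ip w (Qi *\<^sub>v w) = of_real xk"
    unfolding Qi_def quad_udu[OF U w] xk_def of_real_sum by (rule sum.cong) auto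
  finally have d1: "det (of_real uh \<cdot>\<^sub>m 1\<^sub>m d - (A + outer w)) = of_real ((\<Prod>i<d. uh - lam i) * (1 - xk))" by simp
  have dN: "of_real uh \<cdot>\<^sub>m 1\<^sub>m d - (A + outer w) = V * dmat d (\<lambda>i. of_real uh - of_real (nu i)) * adj V"
    unfolding Vk by (rule udu_minus[OF V])
  have d2: "det (of_real uh \<cdot>\<^sub>m 1\<^sub>m d - (A + outer w)) = of_real (\<Prod>i<d. uh - nu i)"
    unfolding dN det_diag[OF V] by simp
  have "(of_real (\<Prod>i<d. uh - nu i) :: complex) = of_real ((\<Prod>i<d. uh - lam i) * (1 - xk))"
    using d1 d2 by (metis (no_types))
  hence pe: "(\<Prod>i<d. uh - nu i) = (\<Prod>i<d. uh - lam i) * (1 - xk)" by (rule of_real_eq_iff[THEN iffD1])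
  have pn: "(\<Prod>i<d. uh - nu i) > 0" by (rule prod_pos) (use nu_lt in auto)
  have qpos': "uh - lam i > 0" if "i < d" for i using qpos[OF that] by linarith
  have pl: "(\<Prod>i<d. uh - lam i) > 0" by (rule prod_pos) (use qpos' in auto)
  have xk1: "1 - xk > 0" using zero_less_mult_pos[of "\<Prod>i<d. uh - lam i" "1 - xk"] pe pn pl by simp
  have "Phi d uh (A + outer w) = trlog (V * dmat d (\<lambda>i. 1 / (of_real uh - of_real (nu i))) * adj V)"
    unfolding Phi_def dN by (subst minv_udu[OF V]) (use nu_lt in auto)
  also have "\<dots> = (\<Sum>i<d. ln (1 / (uh - nu i)))" unfolding trlog_diag[OF V] re_inv_diff ..
  also have "\<dots> = (\<Sum>i<d. - ln (uh - nu i))"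
  proof (rule sum.cong[OF refl])
    fix i assume "i \<in> {..<d}"
    hence "uh - nu i > 0" using nu_lt by auto
    thus "ln (1 / (uh - nu i)) = - ln (uh - nu i)" by (simp add: ln_div)
  qed
  also have "\<dots> = - (\<Sum>i<d. ln (uh - nu i))" by (simp add: sum_negf)
  also have "(\<Sum>i<d. ln (uh - nu i)) = ln (\<Prod>i<d. uh - nu i)" by (rule ln_prod[symmetric]) (use nu_lt in auto)
  also have "\<dots> = ln (\<Prod>i<d. uh - lam i) + ln (1 - xk)" unfolding pe by (rule ln_mult_pos[OF pl xk1])
  also have "ln (\<Prod>i<d. uh - lam i) = (\<Sum>i<d. ln (uh - lam i))" proof (rule ln_prod)
    fix i assume "i \<in> {..<d}"
    thus "uh - lam i \<noteq> 0" using qpos'[of i] by auto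
  qed simp
  finally show ?thesis using xk1 unfolding xk_def by simp
qed

lemma aalg_herm: "(\<And>i. i < j \<Longrightarrow> dim_vec (v (\<sigma> i)) = d) \<Longrightarrow> herm d (Aalg d v \<sigma> j)"
proof (induction j)
  case 0 show ?case unfolding herm_def by auto
next
  case (Suc j)
  have "herm d (Aalg d v \<sigma> j)" using Suc by auto
  moreover have "herm d (outer (v (\<sigma> j)))" by (rule herm_outer) (use Suc.prems in auto)
  ultimately show ?case by (simp add: herm_add)
qed

lemma iso_col: assumes U: "unitary d U" and iso: "msum d (\<lambda>i. outer (v i)) m = 1\<^sub>m d"
  and dv: "\<And>k. k < m \<Longrightarrow> dim_vec (v k) = d" and i: "i < d"
  shows "(\<Sum>k<m. (cmod ((adj U *\<^sub>v v k) $ i))^2) = 1"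
proof -
  have Uc: "U \<in> carrier_mat d d" using U unfolding unitary_def by auto
  define x where "x = col U i"
  have xc: "x \<in> carrier_vec d" unfolding x_def using Uc i by auto
  have vc: "v k \<in> carrier_vec d" if "k < m" for k using dv[OF that] by auto
  have "(\<Sum>k<m. (cmod ((adj U *\<^sub>v v k) $ i))^2) = (\<Sum>k<m. Re (ip x (outer (v k) *\<^sub>v x)))"
  proof (rule sum.cong[OF refl])
    fix k assume "k \<in> {..<m}"
    hence k: "k < m" by simp
    have "(adj U *\<^sub>v v k) $ i = ip x (v k)" unfolding x_def by (rule adj_col[OF Uc vc[OF k] i])
    also have "\<dots> = cnj (ip (v k) x)" by (rule ip_cnj) (use xc dv[OF k] in auto)
    finally have "cmod ((adj U *\<^sub>v v k) $ i) = cmod (ip (v k) x)" by simp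
    thus "(cmod ((adj U *\<^sub>v v k) $ i))^2 = Re (ip x (outer (v k) *\<^sub>v x))"
      using outer_quad[OF vc[OF k] xc] by simp
  qed
  also have "\<dots> = Re (\<Sum>k<m. ip x (outer (v k) *\<^sub>v x))" by (simp add: Re_sum)
  also have "(\<Sum>k<m. ip x (outer (v k) *\<^sub>v x)) = ip x (msum d (\<lambda>i. outer (v i)) m *\<^sub>v x)"
    by (rule ip_msum[symmetric]) (use dv xc in auto)
  also have "\<dots> = ip x x" unfolding iso using xc by simp
  also have "\<dots> = of_real (\<Sum>a<dim_vec x. (cmod (x$a))^2)" by (rule ip_self)
  also have "(\<Sum>a<dim_vec x. (cmod (x$a))^2) = 1" using col_norm[OF U i] xc Uc unfolding x_def by simp
  finally show ?thesis by simp
qed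

lemma jensen_part: fixes z :: "complex vec" and q :: "nat \<Rightarrow> real"
  assumes a: "\<alpha> > 0" and zn: "(\<Sum>i<d. (cmod (z$i))^2) = \<alpha>"
  and q: "\<And>i. i < d \<Longrightarrow> q i > \<alpha>"
  shows "ln (1 - (\<Sum>i<d. (cmod (z$i))^2 / q i)) \<ge> (1/\<alpha>) * (\<Sum>i<d. (cmod (z$i))^2 * ln (1 - \<alpha> / q i))"
proof -
  define p where "p i = (cmod (z$i))^2 / \<alpha>" for i
  define y where "y i = 1 - \<alpha> / q i" for i
  have qp: "q i > 0" if "i < d" for i using q[OF that] a by linarith
  have yp: "y i > 0" if "i < d" for i unfolding y_def using q[OF that] qp[OF that] by (simp add: field_simps)
  have ps: "(\<Sum>i<d. p i) = 1" unfolding p_def using zn a by (simp add: sum_divide_distrib[symmetric])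
  have "(\<Sum>i\<in>{..<d}. p i * ln (y i)) \<le> ln (\<Sum>i\<in>{..<d}. p i * y i)"
    by (rule jensen_ln) (use ps yp a in \<open>auto simp: p_def\<close>)
  also have "(\<Sum>i\<in>{..<d}. p i * y i) = (\<Sum>i<d. p i - (cmod (z$i))^2 / q i)"
    by (rule sum.cong[OF refl]) (use a in \<open>simp add: p_def y_def field_simps\<close>)
  also have "\<dots> = (\<Sum>i<d. p i) - (\<Sum>i<d. (cmod (z$i))^2 / q i)" by (simp add: sum_subtractf)
  also have "\<dots> = 1 - (\<Sum>i<d. (cmod (z$i))^2 / q i)" using ps by simp
  finally have "(\<Sum>i<d. p i * ln (y i)) \<le> ln (1 - (\<Sum>i<d. (cmod (z$i))^2 / q i))" .
  moreover have "(\<Sum>i<d. p i * ln (y i)) = (1/\<alpha>) * (\<Sum>i<d. (cmod (z$i))^2 * ln (1 - \<alpha> / q i))"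
    unfolding p_def y_def by (simp add: sum_distrib_left)
  ultimately show ?thesis by simp
qed

lemma re_ratio: "Re (1 / (complex_of_real a - complex_of_real b) * (complex_of_real c - complex_of_real b)) = (c - b) / (a - b)"
proof -
  have "1 / (complex_of_real a - complex_of_real b) * (complex_of_real c - complex_of_real b) = complex_of_real ((c - b) / (a - b))" by simp
  thus ?thesis by (metis Re_complex_of_real)
qed

lemma re_lin: "Re (1 + - complex_of_real a * (1 / (complex_of_real c - complex_of_real b))) = 1 - a / (c - b)"
proof -
  have "1 + - complex_of_real a * (1 / (complex_of_real c - complex_of_real b)) = complex_of_real (1 - a / (c - b))" by simp
  thus ?thesis by (metis Re_complex_of_real)
qed

lemma card_Balg: "card (Balg m \<sigma> j) \<ge> m - j"
proof -
  have "{0..<m} \<subseteq> Balg m \<sigma> j \<union> \<sigma> ` {..<j}" unfolding Balg_def by auto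
  hence "card {0..<m} \<le> card (Balg m \<sigma> j \<union> \<sigma> ` {..<j})" by (rule card_mono[rotated]) (auto simp: Balg_def)
  also have "\<dots> \<le> card (Balg m \<sigma> j) + card (\<sigma> ` {..<j})" by (rule card_Un_le)
  also have "card (\<sigma> ` {..<j}) \<le> j" using card_image_le[of "{..<j}" \<sigma>] by simp
  finally show ?thesis by simp
qed

lemma col_msum: assumes U: "unitary d U" and dv: "\<And>k. k < n \<Longrightarrow> dim_vec (f k) = d" and i: "i < d"
  shows "(\<Sum>k<n. (cmod ((adj U *\<^sub>v f k) $ i))^2) = Re (ip (col U i) (msum d (\<lambda>k. outer (f k)) n *\<^sub>v col U i))"
proof -
  have Uc: "U \<in> carrier_mat d d" using U unfolding unitary_def by auto
  define x where "x = col U i"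
  have xc: "x \<in> carrier_vec d" unfolding x_def using Uc i by auto
  have vc: "f k \<in> carrier_vec d" if "k < n" for k using dv[OF that] by auto
  have "(\<Sum>k<n. (cmod ((adj U *\<^sub>v f k) $ i))^2) = (\<Sum>k<n. Re (ip x (outer (f k) *\<^sub>v x)))"
  proof (rule sum.cong[OF refl])
    fix k assume "k \<in> {..<n}"
    hence k: "k < n" by simp
    have "(adj U *\<^sub>v f k) $ i = ip x (f k)" unfolding x_def by (rule adj_col[OF Uc vc[OF k] i])
    also have "\<dots> = cnj (ip (f k) x)" by (rule ip_cnj) (use xc dv[OF k] in auto)
    finally have "cmod ((adj U *\<^sub>v f k) $ i) = cmod (ip (f k) x)" by simp
    thus "(cmod ((adj U *\<^sub>v f k) $ i))^2 = Re (ip x (outer (f k) *\<^sub>v x))"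
      using outer_quad[OF vc[OF k] xc] by simp
  qed
  also have "\<dots> = Re (\<Sum>k<n. ip x (outer (f k) *\<^sub>v x))" by (simp add: Re_sum)
  also have "(\<Sum>k<n. ip x (outer (f k) *\<^sub>v x)) = ip x (msum d (\<lambda>k. outer (f k)) n *\<^sub>v x)"
    by (rule ip_msum[symmetric]) (use dv xc in auto)
  finally show ?thesis unfolding x_def .
qed

lemma aalg_msum: "Aalg d v \<sigma> j = msum d (\<lambda>l. outer (v (\<sigma> l))) j"
  by (induction j) auto

lemma cheb: fixes a b :: "nat \<Rightarrow> real"
  assumes "finite I" and sim: "\<And>i l. i \<in> I \<Longrightarrow> l \<in> I \<Longrightarrow> (a i - a l) * (b i - b l) \<ge> 0"
  shows "(\<Sum>i\<in>I. a i) * (\<Sum>i\<in>I. b i) \<le> real (card I) * (\<Sum>i\<in>I. a i * b i)"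
proof -
  have "0 \<le> (\<Sum>i\<in>I. \<Sum>l\<in>I. (a i - a l) * (b i - b l))"
    by (intro sum_nonneg) (use sim in auto)
  also have "(\<Sum>i\<in>I. \<Sum>l\<in>I. (a i - a l) * (b i - b l))
      = (\<Sum>i\<in>I. \<Sum>l\<in>I. a i * b i) + (\<Sum>i\<in>I. \<Sum>l\<in>I. a l * b l) - (\<Sum>i\<in>I. \<Sum>l\<in>I. a i * b l) - (\<Sum>i\<in>I. \<Sum>l\<in>I. a l * b i)"
    by (simp add: algebra_simps sum.distrib sum_subtractf)
  also have "(\<Sum>i\<in>I. \<Sum>l\<in>I. a i * b i) = real (card I) * (\<Sum>i\<in>I. a i * b i)"
    by (simp add: sum_distrib_left mult.commute)
  also have "(\<Sum>i\<in>I. \<Sum>l\<in>I. a l * b l) = real (card I) * (\<Sum>i\<in>I. a i * b i)"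
    by simp
  also have "(\<Sum>i\<in>I. \<Sum>l\<in>I. a i * b l) = (\<Sum>i\<in>I. a i) * (\<Sum>i\<in>I. b i)"
    by (simp add: sum_product)
  also have "(\<Sum>i\<in>I. \<Sum>l\<in>I. a l * b i) = (\<Sum>i\<in>I. a i) * (\<Sum>i\<in>I. b i)"
    by (subst sum.swap) (simp add: sum_product)
  finally show ?thesis by simp
qed

theorem lemma3p5:
  fixes d m j :: nat and \<alpha> :: real and v :: "nat \<Rightarrow> complex vec" and \<sigma> :: "nat \<Rightarrow> nat"
  assumes dimv: "\<forall>i<m. dim_vec (v i) = d"
    and meven: "even m"
    and isotropic: "msum d (\<lambda>i. outer (v i)) m = 1\<^sub>m d"
    and norms: "\<forall>i<m. sqnorm (v i) = \<alpha>"
    and alpha_le: "\<alpha> \<le> 1 / (221 * real d)"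
    and run: "alg_run d m \<alpha> v \<sigma>"
    and jlt: "j < m div 2"
    and gap: "\<forall>j'\<le>j. ualg \<alpha> d j' - lmax (Aalg d v \<sigma> j') \<ge> 1/3"
    and cond: "\<forall>j'\<le>j. kappa (of_real (ualg \<alpha> d j') \<cdot>\<^sub>m 1\<^sub>m d - Aalg d v \<sigma> j') \<le> 3/2"
  shows "(\<Sum>k\<in>Balg m \<sigma> j.
            Phi d (ualg \<alpha> d j) (Aalg d v \<sigma> j)
            - Phi d (ualg \<alpha> d (Suc j)) (Aalg d v \<sigma> j + outer (v k)))
         \<ge> real (m - j) *
             trlog (minv (of_real (ualg \<alpha> d j) \<cdot>\<^sub>m 1\<^sub>m d - Aalg d v \<sigma> j)
                    * (of_real (ualg \<alpha> d (Suc j)) \<cdot>\<^sub>m 1\<^sub>m d - Aalg d v \<sigma> j))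
           + (1 / \<alpha>) * (real (m - j) / real m) *
             trlog (1\<^sub>m d - of_real \<alpha> \<cdot>\<^sub>m minv (of_real (ualg \<alpha> d (Suc j)) \<cdot>\<^sub>m 1\<^sub>m d - Aalg d v \<sigma> j))"
proof -
  have sig: "\<sigma> i < m" if "i < j" for i
  proof -
    have "i < m div 2" using that jlt by linarith
    hence "\<sigma> i \<in> Balg m \<sigma> i" using run unfolding alg_run_def by blast
    thus ?thesis unfolding Balg_def by auto
  qed
  have dvs: "dim_vec (v (\<sigma> i)) = d" if "i < j" for i using dimv sig[OF that] by auto
  define A where "A = Aalg d v \<sigma> j"
  define B where "B = Balg m \<sigma> j"
  define u where "u = ualg \<alpha> d j"
  define uh where "uh = ualg \<alpha> d (Suc j)"
  have Ah: "herm d A" unfolding A_def by (rule aalg_herm) (use dvs in auto)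
  have Ac: "A \<in> carrier_mat d d" by (rule herm_carrier[OF Ah])
  have Bsub: "B \<subseteq> {..<m}" unfolding B_def Balg_def by auto
  have finB: "finite B" using Bsub finite_subset by blast
  have dvk: "dim_vec (v k) = d" if "k \<in> B" for k using dimv Bsub that by auto
  have main: "(\<Sum>k\<in>B. Phi d u A - Phi d uh (A + outer (v k)))
         \<ge> real (m - j) * trlog (minv (of_real u \<cdot>\<^sub>m 1\<^sub>m d - A) * (of_real uh \<cdot>\<^sub>m 1\<^sub>m d - A))
           + (1 / \<alpha>) * (real (m - j) / real m) * trlog (1\<^sub>m d - of_real \<alpha> \<cdot>\<^sub>m minv (of_real uh \<cdot>\<^sub>m 1\<^sub>m d - A))"
  proof (cases "d = 0")
    case True
    have z: "trlog M = 0" if "M \<in> carrier_mat d d" for M using trlog0 that True by simp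
    have zP: "Phi d x X = 0" if "X \<in> carrier_mat d d" for x X
      unfolding Phi_def by (rule z, rule minv_carrier[of _ d]) (use that in auto)
    have mc: "minv (of_real x \<cdot>\<^sub>m 1\<^sub>m d - A) \<in> carrier_mat d d" for x
      by (rule minv_carrier) (use Ac in auto)
    have "(\<Sum>k\<in>B. Phi d u A - Phi d uh (A + outer (v k))) = 0"
      by (rule sum.neutral) (use zP Ac dvk in auto)
    moreover have "trlog (minv (of_real u \<cdot>\<^sub>m 1\<^sub>m d - A) * (of_real uh \<cdot>\<^sub>m 1\<^sub>m d - A)) = 0"
      by (rule z) (use mc[of u] Ac in auto)
    moreover have "trlog (1\<^sub>m d - of_real \<alpha> \<cdot>\<^sub>m minv (of_real uh \<cdot>\<^sub>m 1\<^sub>m d - A)) = 0"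
      by (rule z) (use mc[of uh] Ac in auto)
    ultimately show ?thesis by simp
  next
    case False
    hence dpos: "d > 0" by simp
    have mpos: "m > 0" using jlt by auto
    have sqv: "(\<Sum>a<d. (cmod (v k $ a))^2) = \<alpha>" if "k < m" for k
      using norms dimv that unfolding sqnorm_def by auto
    have apos: "\<alpha> > 0"
    proof -
      have "msum d (\<lambda>i. outer (v i)) m $$ (0,0) = (\<Sum>k<m. v k $ 0 * cnj (v k $ 0))"
        by (rule msum_index) (use dimv dpos in auto)
      hence "(\<Sum>k<m. v k $ 0 * cnj (v k $ 0)) = 1" using isotropic dpos by simp
      moreover have "(\<Sum>k<m. v k $ 0 * cnj (v k $ 0)) = of_real (\<Sum>k<m. (cmod (v k $ 0))^2)"
        unfolding of_real_sum by (rule sum.cong[OF refl]) (metis complex_norm_square)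
      ultimately have s1: "(\<Sum>k<m. (cmod (v k $ 0))^2) = 1" by (metis of_real_eq_1_iff)
      have "(\<Sum>k<m. (cmod (v k $ 0))^2) \<le> (\<Sum>k<m. \<alpha>)"
      proof (rule sum_mono)
        fix k assume "k \<in> {..<m}"
        hence k: "k < m" by simp
        have "(cmod (v k $ 0))^2 \<le> (\<Sum>a<d. (cmod (v k $ a))^2)"
          by (rule member_le_sum[of 0 "{..<d}" "\<lambda>a. (cmod (v k $ a))^2"]) (use dpos in auto)
        thus "(cmod (v k $ 0))^2 \<le> \<alpha>" using sqv[OF k] by simp
      qed
      hence "1 \<le> real m * \<alpha>" using s1 by simp
      show ?thesis
      proof (rule ccontr)
        assume "\<not> \<alpha> > 0"
        hence "real m * \<alpha> \<le> 0" by (simp add: mult_nonneg_nonpos)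
        thus False using \<open>1 \<le> real m * \<alpha>\<close> by linarith
      qed
    qed
    have ale: "\<alpha> \<le> 1/221"
    proof -
      have "1 / (221 * real d) \<le> 1 / 221" using dpos by (simp add: field_simps)
      thus ?thesis using alpha_le by linarith
    qed
    obtain U lam where U: "unitary d U" and Aeq: "A = U * dmat d (\<lambda>i. complex_of_real (lam i)) * adj U"
      using spectral[OF Ah] by blast
    have Uc: "U \<in> carrier_mat d d" using U unfolding unitary_def by auto
    have lamle: "lam i \<le> lmax A" if i: "i < d" for i
    proof -
      have "set_mset (eigs A) = (\<lambda>i. complex_of_real (lam i)) ` {0..<d}"
        unfolding Aeq eigs_diag[OF U] by simp
      hence "Re ` set_mset (eigs A) = lam ` {0..<d}" by (auto simp: image_image)
      thus ?thesis unfolding lmax_def using i by simp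
    qed
    have gapj: "u - lmax A \<ge> 1/3" using gap unfolding u_def A_def by auto
    have uh_eq: "uh = u + \<alpha> / real d" unfolding uh_def u_def ualg_def by (simp add: algebra_simps add_divide_distrib)
    have ad: "\<alpha> / real d \<ge> 0" using apos by simp
    have gh: "uh - lmax A \<ge> 1/3" using gapj uh_eq ad by linarith
    have plam: "u - lam i \<ge> 1/3" if "i < d" for i using lamle[OF that] gapj by linarith
    have qlam: "uh - lam i \<ge> 1/3" if "i < d" for i using plam[OF that] uh_eq ad by linarith
    have qgt: "uh - lam i > \<alpha>" if "i < d" for i using qlam[OF that] ale by linarith
    have nzP: "complex_of_real u - complex_of_real (lam i) \<noteq> 0" if "i < d" for i
    proof -
      have "u - lam i \<noteq> 0" using plam[OF that] by linarith
      thus ?thesis by (metis of_real_diff of_real_eq_0_iff)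
    qed
    have nzQ: "complex_of_real uh - complex_of_real (lam i) \<noteq> 0" if "i < d" for i
    proof -
      have "uh - lam i \<noteq> 0" using qlam[OF that] by linarith
      thus ?thesis by (metis of_real_diff of_real_eq_0_iff)
    qed
    have dP: "of_real u \<cdot>\<^sub>m 1\<^sub>m d - A = U * dmat d (\<lambda>i. of_real u - of_real (lam i)) * adj U"
      unfolding Aeq by (rule udu_minus[OF U])
    have dQ: "of_real uh \<cdot>\<^sub>m 1\<^sub>m d - A = U * dmat d (\<lambda>i. of_real uh - of_real (lam i)) * adj U"
      unfolding Aeq by (rule udu_minus[OF U])
    have mP: "minv (of_real u \<cdot>\<^sub>m 1\<^sub>m d - A) = U * dmat d (\<lambda>i. 1 / (of_real u - of_real (lam i))) * adj U"
      unfolding dP by (rule minv_udu[OF U nzP])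
    have mQ: "minv (of_real uh \<cdot>\<^sub>m 1\<^sub>m d - A) = U * dmat d (\<lambda>i. 1 / (of_real uh - of_real (lam i))) * adj U"
      unfolding dQ by (rule minv_udu[OF U nzQ])
    have PhiA: "Phi d u A = (\<Sum>i<d. ln (1 / (u - lam i)))"
      unfolding Phi_def mP trlog_diag[OF U] re_inv_diff ..
    define T where "T = (\<Sum>i<d. ln (uh - lam i) - ln (u - lam i))"
    have trT: "trlog (minv (of_real u \<cdot>\<^sub>m 1\<^sub>m d - A) * (of_real uh \<cdot>\<^sub>m 1\<^sub>m d - A)) = T"
    proof -
      have "trlog (minv (of_real u \<cdot>\<^sub>m 1\<^sub>m d - A) * (of_real uh \<cdot>\<^sub>m 1\<^sub>m d - A))
          = (\<Sum>i<d. ln ((uh - lam i) / (u - lam i)))"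
        unfolding mP dQ udu_mult[OF U] trlog_diag[OF U] re_ratio ..
      also have "\<dots> = T" unfolding T_def
      proof (rule sum.cong[OF refl])
        fix i assume "i \<in> {..<d}"
        hence i: "i < d" by simp
        have "uh - lam i > 0" "u - lam i > 0" using qlam[OF i] plam[OF i] by linarith+
        thus "ln ((uh - lam i) / (u - lam i)) = ln (uh - lam i) - ln (u - lam i)" by (simp add: ln_div)
      qed
      finally show ?thesis .
    qed
    have T0: "T \<ge> 0" unfolding T_def
    proof (rule sum_nonneg)
      fix i assume "i \<in> {..<d}"
      hence i: "i < d" by simp
      have "u - lam i > 0" using plam[OF i] by linarith
      moreover have "u - lam i \<le> uh - lam i" using uh_eq ad by linarith
      ultimately have "ln (u - lam i) \<le> ln (uh - lam i)" by simp
      thus "0 \<le> ln (uh - lam i) - ln (u - lam i)" by simp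
    qed
    define Lf where "Lf i = ln (1 - \<alpha> / (uh - lam i))" for i
    have Lf0: "Lf i \<le> 0" if i: "i < d" for i
    proof -
      have qp: "uh - lam i > 0" using qgt[OF i] apos by linarith
      have "1 - \<alpha> / (uh - lam i) > 0" using qgt[OF i] qp by (simp add: field_simps)
      moreover have "1 - \<alpha> / (uh - lam i) \<le> 1" using apos qp by simp
      ultimately show ?thesis unfolding Lf_def by simp
    qed
    have trL: "trlog (1\<^sub>m d - of_real \<alpha> \<cdot>\<^sub>m minv (of_real uh \<cdot>\<^sub>m 1\<^sub>m d - A)) = (\<Sum>i<d. Lf i)"
    proof -
      have "1\<^sub>m d - of_real \<alpha> \<cdot>\<^sub>m minv (of_real uh \<cdot>\<^sub>m 1\<^sub>m d - A)
          = 1 \<cdot>\<^sub>m 1\<^sub>m d + (- of_real \<alpha>) \<cdot>\<^sub>m (U * dmat d (\<lambda>i. 1 / (of_real uh - of_real (lam i))) * adj U)"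
        unfolding mQ by (rule eq_matI) (use Uc in auto)
      also have "\<dots> = U * dmat d (\<lambda>i. 1 + (- of_real \<alpha>) * (1 / (of_real uh - of_real (lam i)))) * adj U"
        by (rule udu_lin[OF U])
      finally have e: "1\<^sub>m d - of_real \<alpha> \<cdot>\<^sub>m minv (of_real uh \<cdot>\<^sub>m 1\<^sub>m d - A) = U * dmat d (\<lambda>i. 1 + (- of_real \<alpha>) * (1 / (of_real uh - of_real (lam i)))) * adj U" .
      show ?thesis unfolding e Lf_def trlog_diag[OF U] re_lin ..
    qed
    define w where "w k = adj U *\<^sub>v v k" for k
    define xk where "xk k = (\<Sum>i<d. (cmod (w k $ i))^2 / (uh - lam i))" for k
    have termk: "Phi d u A - Phi d uh (A + outer (v k)) = T + ln (1 - xk k)"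
      and jen: "ln (1 - xk k) \<ge> (1/\<alpha>) * (\<Sum>i<d. (cmod (w k $ i))^2 * Lf i)" if k: "k \<in> B" for k
    proof -
      have km: "k < m" using k Bsub by auto
      have vc: "v k \<in> carrier_vec d" using dvk[OF k] by auto
      have pu: "Phi d uh (A + outer (v k)) = - ((\<Sum>i<d. ln (uh - lam i)) + ln (1 - xk k)) \<and> 1 - xk k > 0"
        unfolding xk_def w_def
        by (rule phi_update[OF U Aeq lamle _ vc sqv[OF km] ale]) (use gh in auto)
      have "Phi d u A = - (\<Sum>i<d. ln (u - lam i))" unfolding PhiA
      proof -
        have "(\<Sum>i<d. ln (1 / (u - lam i))) = (\<Sum>i<d. - ln (u - lam i))"
        proof (rule sum.cong[OF refl])
          fix i assume "i \<in> {..<d}"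
          hence i: "i < d" by simp
          have "u - lam i > 0" using plam[OF i] by linarith
          thus "ln (1 / (u - lam i)) = - ln (u - lam i)" by (simp add: ln_div)
        qed
        thus "(\<Sum>i<d. ln (1 / (u - lam i))) = - (\<Sum>i<d. ln (u - lam i))" by (simp add: sum_negf)
      qed
      thus "Phi d u A - Phi d uh (A + outer (v k)) = T + ln (1 - xk k)"
        using pu unfolding T_def by (simp add: sum_subtractf)
      have zn: "(\<Sum>i<d. (cmod (w k $ i))^2) = \<alpha>" unfolding w_def norm_adj[OF U vc] by (rule sqv[OF km])
      show "ln (1 - xk k) \<ge> (1/\<alpha>) * (\<Sum>i<d. (cmod (w k $ i))^2 * Lf i)"
        unfolding xk_def Lf_def by (rule jensen_part[OF apos zn qgt])
    qed
    have inj: "inj_on \<sigma> {..<j}"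
    proof (rule inj_onI)
      fix a b assume a: "a \<in> {..<j}" and b: "b \<in> {..<j}" and e: "\<sigma> a = \<sigma> b"
      show "a = b"
      proof (rule ccontr)
        assume "a \<noteq> b"
        then consider "a < b" | "b < a" by linarith
        thus False
        proof cases
          case 1
          have "b < m div 2" using b jlt by simp
          hence "\<sigma> b \<in> Balg m \<sigma> b" using run unfolding alg_run_def by blast
          moreover have "\<sigma> a \<in> \<sigma> ` {..<b}" using 1 by auto
          ultimately show False using e unfolding Balg_def by auto
        next
          case 2
          have "a < m div 2" using a jlt by simp
          hence "\<sigma> a \<in> Balg m \<sigma> a" using run unfolding alg_run_def by blast
          moreover have "\<sigma> b \<in> \<sigma> ` {..<a}" using 2 by auto
          ultimately show False using e unfolding Balg_def by auto
        qed
      qed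
    qed
    have Amsum: "A = msum d (\<lambda>l. outer (v (\<sigma> l))) j" unfolding A_def by (rule aalg_msum)
    have lam_sum: "(\<Sum>l<j. (cmod (w (\<sigma> l) $ i))^2) = lam i" if i: "i < d" for i
    proof -
      have "(\<Sum>l<j. (cmod (w (\<sigma> l) $ i))^2) = Re (ip (col U i) (msum d (\<lambda>l. outer (v (\<sigma> l))) j *\<^sub>v col U i))"
        unfolding w_def by (rule col_msum[OF U _ i]) (use dvs in auto)
      also have "msum d (\<lambda>l. outer (v (\<sigma> l))) j = A" using Amsum by simp
      also have "Re (ip (col U i) (A *\<^sub>v col U i)) = lam i" unfolding Aeq by (rule col_eig[OF U i])
      finally show ?thesis .
    qed
    have rowsum: "(\<Sum>k<m. (cmod (w k $ i))^2) = 1" if i: "i < d" for i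
      unfolding w_def by (rule iso_col[OF U isotropic _ i]) (use dimv in auto)
    have ci: "(\<Sum>k\<in>B. (cmod (w k $ i))^2) = 1 - lam i" if i: "i < d" for i
    proof -
      have Bd: "B = {..<m} - \<sigma> ` {..<j}" unfolding B_def Balg_def by auto
      have sub: "\<sigma> ` {..<j} \<subseteq> {..<m}" using sig by auto
      have "(\<Sum>k\<in>B. (cmod (w k $ i))^2) = (\<Sum>k<m. (cmod (w k $ i))^2) - (\<Sum>k\<in>\<sigma> ` {..<j}. (cmod (w k $ i))^2)"
        unfolding Bd by (rule sum_diff) (use sub in auto)
      also have "(\<Sum>k\<in>\<sigma> ` {..<j}. (cmod (w k $ i))^2) = (\<Sum>l<j. (cmod (w (\<sigma> l) $ i))^2)"
        by (simp add: sum.reindex[OF inj])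
      finally show ?thesis using lam_sum[OF i] rowsum[OF i] by simp
    qed
    have wn: "(\<Sum>i<d. (cmod (w k $ i))^2) = \<alpha>" if k: "k < m" for k
    proof -
      have "v k \<in> carrier_vec d" using dimv k by (auto intro: carrier_vecI)
      thus ?thesis unfolding w_def using norm_adj[OF U] sqv[OF k] by simp
    qed
    have malpha: "real m * \<alpha> = real d"
    proof -
      have "real d = (\<Sum>i<d. (\<Sum>k<m. (cmod (w k $ i))^2))" using rowsum by simp
      also have "\<dots> = (\<Sum>k<m. \<Sum>i<d. (cmod (w k $ i))^2)" by (rule sum.swap)
      also have "\<dots> = (\<Sum>k<m. \<alpha>)" using wn by simp
      finally show ?thesis by simp
    qed
    have trA: "(\<Sum>i<d. lam i) = real j * \<alpha>"
    proof -
      have "(\<Sum>i<d. lam i) = (\<Sum>i<d. \<Sum>l<j. (cmod (w (\<sigma> l) $ i))^2)" using lam_sum by simp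
      also have "\<dots> = (\<Sum>l<j. \<Sum>i<d. (cmod (w (\<sigma> l) $ i))^2)" by (rule sum.swap)
      also have "\<dots> = (\<Sum>l<j. \<alpha>)" using wn sig by simp
      finally show ?thesis by simp
    qed
    have J0: "(\<Sum>k\<in>B. ln (1 - xk k)) \<ge> (\<Sum>k\<in>B. (1/\<alpha>) * (\<Sum>i<d. (cmod (w k $ i))^2 * Lf i))"
      by (rule sum_mono) (rule jen)
    have J1: "(\<Sum>k\<in>B. (1/\<alpha>) * (\<Sum>i<d. (cmod (w k $ i))^2 * Lf i)) = (1/\<alpha>) * (\<Sum>i<d. Lf i * (\<Sum>k\<in>B. (cmod (w k $ i))^2))"
    proof -
      have "(\<Sum>k\<in>B. (1/\<alpha>) * (\<Sum>i<d. (cmod (w k $ i))^2 * Lf i)) = (1/\<alpha>) * (\<Sum>k\<in>B. \<Sum>i<d. (cmod (w k $ i))^2 * Lf i)"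
        by (simp add: sum_distrib_left)
      also have "(\<Sum>k\<in>B. \<Sum>i<d. (cmod (w k $ i))^2 * Lf i) = (\<Sum>i<d. \<Sum>k\<in>B. (cmod (w k $ i))^2 * Lf i)"
        by (rule sum.swap)
      also have "\<dots> = (\<Sum>i<d. Lf i * (\<Sum>k\<in>B. (cmod (w k $ i))^2))"
        by (simp add: sum_distrib_left mult.commute)
      finally show ?thesis .
    qed
    have J1': "(\<Sum>i<d. Lf i * (\<Sum>k\<in>B. (cmod (w k $ i))^2)) = (\<Sum>i<d. (1 - lam i) * Lf i)"
      by (rule sum.cong[OF refl]) (simp add: ci mult.commute)
    have Lfmono: "Lf l \<le> Lf i" if i: "i < d" and l: "l < d" and le: "lam i \<le> lam l" for i l
    proof -
      have ql: "uh - lam l > \<alpha>" by (rule qgt[OF l])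
      have qle: "uh - lam l \<le> uh - lam i" using le by simp
      have "\<alpha> / (uh - lam i) \<le> \<alpha> / (uh - lam l)"
        by (rule divide_left_mono) (use apos ql qle in auto)
      moreover have "1 - \<alpha> / (uh - lam l) > 0" using ql apos by (simp add: field_simps)
      ultimately show ?thesis unfolding Lf_def by simp
    qed
    have cheb_app: "(\<Sum>i<d. 1 - lam i) * (\<Sum>i<d. Lf i) \<le> real d * (\<Sum>i<d. (1 - lam i) * Lf i)"
    proof -
      have "(\<Sum>i\<in>{..<d}. 1 - lam i) * (\<Sum>i\<in>{..<d}. Lf i) \<le> real (card {..<d}) * (\<Sum>i\<in>{..<d}. (1 - lam i) * Lf i)"
      proof (rule cheb)
        fix i l assume "i \<in> {..<d}" "l \<in> {..<d}"
        hence i: "i < d" and l: "l < d" by auto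
        show "0 \<le> ((1 - lam i) - (1 - lam l)) * (Lf i - Lf l)"
        proof (cases "lam i \<le> lam l")
          case True thus ?thesis using Lfmono[OF i l True] by (simp add: mult_nonneg_nonneg)
        next
          case False
          hence "lam l \<le> lam i" by simp
          thus ?thesis using Lfmono[OF l i] by (simp add: mult_nonpos_nonpos)
        qed
      qed simp
      thus ?thesis by simp
    qed
    have frac_eq: "(real d - real j * \<alpha>) / real d = real (m - j) / real m"
    proof -
      have jm: "j \<le> m" using jlt by simp
      have "(real d - real j * \<alpha>) / real d = (real m * \<alpha> - real j * \<alpha>) / (real m * \<alpha>)" using malpha by simp
      also have "\<dots> = (real m - real j) / real m" using apos mpos by (simp add: field_simps)
      finally show ?thesis using jm by (simp add: of_nat_diff)
    qed
    have S: "(\<Sum>i<d. (1 - lam i) * Lf i) \<ge> (real (m - j) / real m) * (\<Sum>i<d. Lf i)"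
    proof -
      have "(\<Sum>i<d. 1 - lam i) = real d - real j * \<alpha>" using trA by (simp add: sum_subtractf)
      hence "(real d - real j * \<alpha>) * (\<Sum>i<d. Lf i) \<le> real d * (\<Sum>i<d. (1 - lam i) * Lf i)" using cheb_app by simp
      hence "((real d - real j * \<alpha>) / real d) * (\<Sum>i<d. Lf i) \<le> (\<Sum>i<d. (1 - lam i) * Lf i)"
        using dpos by (simp add: field_simps)
      thus ?thesis unfolding frac_eq .
    qed
    have J2: "(\<Sum>k\<in>B. ln (1 - xk k)) \<ge> (1/\<alpha>) * (real (m - j) / real m) * (\<Sum>i<d. Lf i)"
    proof -
      have "(1/\<alpha>) * ((real (m - j) / real m) * (\<Sum>i<d. Lf i)) \<le> (1/\<alpha>) * (\<Sum>i<d. (1 - lam i) * Lf i)"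
        by (rule mult_left_mono[OF S]) (use apos in simp)
      thus ?thesis using J0 J1 J1' by (simp add: mult.assoc)
    qed
    have cB: "real (card B) \<ge> real (m - j)" unfolding B_def using card_Balg[of m j \<sigma>] by simp
    have "(\<Sum>k\<in>B. Phi d u A - Phi d uh (A + outer (v k))) = (\<Sum>k\<in>B. T + ln (1 - xk k))"
      by (rule sum.cong[OF refl]) (rule termk)
    also have "\<dots> = real (card B) * T + (\<Sum>k\<in>B. ln (1 - xk k))" by (simp add: sum.distrib)
    finally have L: "(\<Sum>k\<in>B. Phi d u A - Phi d uh (A + outer (v k))) = real (card B) * T + (\<Sum>k\<in>B. ln (1 - xk k))" .
    have "real (card B) * T \<ge> real (m - j) * T" by (rule mult_right_mono[OF cB T0])
    thus ?thesis unfolding L trT trL using J2 by linarith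
  qed
  thus ?thesis unfolding A_def B_def u_def uh_def .
qed

end
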